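(* Assume the standing assumptions with $\alpha\in(1,2)$. For $\phi\in\mathcal D(\mathbb R^d\times(0,\infty))$ let $\chi_\varepsilon(x,v,t)=\int_0^\infty e^{-\nu(v)z}\nu(v)\phi(x+\varepsilon vz,t)\,dz$. Then $$\lim_{\varepsilon\to0}\varepsilon^{-1}\int_{\mathbb R^d}\nu(v)\lambda(v)\big(\chi_\varepsilon(x,v,t)-\phi(x,t)\big)\,dv=\int_{\mathbb R^d}\lambda(v)\,\big(v\cdot\nabla_x\phi(x,t)\big)\,dv=D^T\nabla_x\phi(x,t),$$ where $D=\int\lambda(v)\otimes v\,dv$, and the limit holds uniformly in $(x,t)$ and in $L^2(\mathbb R^d\times(0,\infty))$.
   Context: Standing assumptions: $d\ge1$, $\alpha\in[1,2)$. $M:\mathbb R^d\to(0,\infty)$ satisfies $M(v)=M(-v)$, $\int M\,dv=1$, $|v|^{d+\alpha}M(v)\to\gamma>0$ as $|v|\to\infty$, $|\nabla_vM(v)|\le CM(v)/(1+|v|)$ and $|D_v^2M(v)|\le CM(v)$. The cross section $\sigma:\mathbb R^d\times\mathbb R^d\to\mathbb R$ satisfies $\sigma(v,v')=\sigma(v',v)$, $\nu_1\le\sigma\le\nu_2$ for constants $0<\nu_1\le\nu_2$, $|\nabla_v\sigma(v',v)|\le C/(1+|v|)$, and $|\sigma(v,v')-\nu_0|\le C/(1+|v|)$ for all $v,v'$, for some constant $\nu_0$. The collision frequency $\nu(v):=\int\sigma(v',v)M(v')\,dv'$ is assumed even. The linear Boltzmann operator is $Q(f)(v)=\int[\sigma(v,v')M(v)f(v')-\sigma(v',v)M(v')f(v)]\,dv'$.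 For a positive weight $w$, $L^2_{w^{-1}}$ denotes the $L^2$ space with norm $(\int|f|^2/w)^{1/2}$. $\lambda\in(L^2_{M^{-1}}(\mathbb R^d))^d$ is the unique solution of $Q(\lambda)=\nabla_vM$, $\int\lambda\,dv=0$ (componentwise). *)

theory Defs
  imports "HOL-Analysis.Analysis"
begin

primrec Ck_on :: "nat \<Rightarrow> 'a::euclidean_space set \<Rightarrow> ('a \<Rightarrow> real) \<Rightarrow> bool" where
  "Ck_on 0 S f = continuous_on S f"
| "Ck_on (Suc k) S f = (continuous_on S f \<and> (\<forall>x\<in>S. f differentiable (at x)) \<and>
      (\<forall>b\<in>Basis. Ck_on k S (\<lambda>x. frechet_derivative f (at x) b)))"

definition smooth_on :: "'a::euclidean_space set \<Rightarrow> ('a \<Rightarrow> real) \<Rightarrow> bool" where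
  "smooth_on S f = (\<forall>k. Ck_on k S f)"

definition test_function :: "('v::euclidean_space \<Rightarrow> real \<Rightarrow> real) \<Rightarrow> bool" where
  "test_function \<phi> = (smooth_on UNIV (case_prod \<phi>) \<and>
      compact (closure {p. case_prod \<phi> p \<noteq> 0}) \<and>
      closure {p. case_prod \<phi> p \<noteq> 0} \<subseteq> UNIV \<times> {0<..})"

definition gradx :: "('v::euclidean_space \<Rightarrow> real \<Rightarrow> real) \<Rightarrow> 'v \<Rightarrow> real \<Rightarrow> 'v" where
  "gradx \<phi> x t = (\<Sum>b\<in>Basis. frechet_derivative (\<lambda>y. \<phi> y t) (at x) b *\<^sub>R b)"

definition coll_freq :: "('v::euclidean_space \<Rightarrow> 'v \<Rightarrow> real) \<Rightarrow> ('v \<Rightarrow> real) \<Rightarrow> 'v \<Rightarrow> real" where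
  "coll_freq \<sigma> M v = (\<integral>v'. \<sigma> v' v * M v' \<partial>lborel)"

definition Qop :: "('v::euclidean_space \<Rightarrow> 'v \<Rightarrow> real) \<Rightarrow> ('v \<Rightarrow> real) \<Rightarrow> ('v \<Rightarrow> 'b::euclidean_space) \<Rightarrow> 'v \<Rightarrow> 'b" where
  "Qop \<sigma> M f v = (\<integral>v'. (\<sigma> v v' * M v) *\<^sub>R f v' - (\<sigma> v' v * M v') *\<^sub>R f v \<partial>lborel)"

definition chi :: "('v::euclidean_space \<Rightarrow> real) \<Rightarrow> ('v \<Rightarrow> real \<Rightarrow> real) \<Rightarrow> real \<Rightarrow> 'v \<Rightarrow> 'v \<Rightarrow> real \<Rightarrow> real" where
  "chi \<nu> \<phi> \<epsilon> x v t =
     (\<integral>z\<in>{0..}. exp (- \<nu> v * z) * \<nu> v * \<phi> (x + (\<epsilon> * z) *\<^sub>R v) t \<partial>lborel)"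

text \<open>D = int lambda(v) (x) v dv, with entries D_{ij} = int v_i lambda_j(v) dv (convention
  chosen so that D^T grad phi = int lambda(v) (v . grad phi) dv, as in the paper).\<close>
definition Dmat :: "('v::euclidean_space \<Rightarrow> 'v) \<Rightarrow> 'v \<Rightarrow> 'v \<Rightarrow> real" where
  "Dmat lam i j = (\<integral>v. (v \<bullet> i) * (lam v \<bullet> j) \<partial>lborel)"

definition DT_apply :: "('v::euclidean_space \<Rightarrow> 'v) \<Rightarrow> 'v \<Rightarrow> 'v" where
  "DT_apply lam g = (\<Sum>j\<in>Basis. (\<Sum>i\<in>Basis. Dmat lam i j * (g \<bullet> i)) *\<^sub>R j)"

end

theory Submission
  imports Defs "HOL-Probability.Distributions"
begin


definition Ek :: "real \<Rightarrow> real \<Rightarrow> real" where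
  "Ek a z = indicator {0..} z * (exp (- a * z) * a)"

lemma Ek_nonneg: "0 \<le> a \<Longrightarrow> 0 \<le> Ek a z"
  by (simp add: Ek_def indicator_def)

lemma Ek_meas[measurable]: "(\<lambda>z. Ek a z) \<in> borel_measurable borel"
  unfolding Ek_def by measurable

lemma Ek_meas2[measurable (raw)]:
  assumes [measurable]: "f \<in> borel_measurable M" "g \<in> borel_measurable M"
  shows "(\<lambda>x. Ek (f x) (g x)) \<in> borel_measurable M"
  unfolding Ek_def by measurable

lemma Ek_moment_nn:
  fixes a :: real assumes a: "0 < a"
  shows "(\<integral>\<^sup>+z. ennreal (Ek a z * z ^ i) \<partial>lborel) = fact i / a ^ i"
proof -
  have "(\<integral>\<^sup>+z. ennreal (Ek a z * z ^ i) \<partial>lborel)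
     = (\<integral>\<^sup>+ x. ennreal (erlang_density 0 a x * x ^ i) \<partial>lborel)"
    by (intro nn_integral_cong) (auto simp: Ek_def erlang_density_def indicator_def ac_simps)
  also have "\<dots> = fact i / a ^ i" using nn_integral_erlang_ith_moment[OF a, of 0 i] by simp
  finally show ?thesis .
qed

lemma Ek_moment:
  fixes a :: real assumes a: "0 < a"
  shows "integrable lborel (\<lambda>z. Ek a z * z ^ i)" "(\<integral>z. Ek a z * z ^ i \<partial>lborel) = fact i / a ^ i"
proof -
  have nn: "AE z in lborel. 0 \<le> Ek a z * z ^ i"
    using a by (auto simp: Ek_def indicator_def)
  have e: "(\<integral>\<^sup>+z. ennreal (Ek a z * z ^ i) \<partial>lborel) = ennreal (fact i / a ^ i)"
    using Ek_moment_nn[OF a] a by (simp add: ennreal_divide_times divide_ennreal[symmetric] ennreal_power)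
  show i: "integrable lborel (\<lambda>z. Ek a z * z ^ i)"
    by (rule integrableI_nn_integral_finite[OF _ nn e]) measurable
  show "(\<integral>z. Ek a z * z ^ i \<partial>lborel) = fact i / a ^ i"
  proof -
    have "ennreal (\<integral>z. Ek a z * z ^ i \<partial>lborel) = ennreal (fact i / a ^ i)"
      using nn_integral_eq_integral[OF i nn] e by simp
    then show ?thesis using a integral_nonneg_AE[OF nn] by (subst (asm) ennreal_inj) auto
  qed
qed

lemma z_part:
  fixes a \<epsilon> B c0 s :: real and \<psi> :: "real \<Rightarrow> real"
  assumes a: "0 < a" and e: "0 < \<epsilon>" and cont: "continuous_on UNIV \<psi>" and bnd: "\<And>z. \<bar>\<psi> z\<bar> \<le> B"
  shows "integrable lborel (\<lambda>z. Ek a z * \<psi> z)"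
    and "ennreal \<bar>(1/\<epsilon>) * (a * ((\<integral>z. Ek a z * \<psi> z \<partial>lborel) - c0)) - s\<bar>
          \<le> ennreal a * (\<integral>\<^sup>+z. ennreal (Ek a z * \<bar>(\<psi> z - c0) / \<epsilon> - z * s\<bar>) \<partial>lborel)"
proof -
  have [measurable]: "\<psi> \<in> borel_measurable borel" using cont by (simp add: borel_measurable_continuous_onI)
  have i0: "integrable lborel (\<lambda>z. Ek a z)" using Ek_moment(1)[OF a, of 0] by simp
  have i1: "integrable lborel (\<lambda>z. Ek a z * z)" using Ek_moment(1)[OF a, of 1] by simp
  have v0: "(\<integral>z. Ek a z \<partial>lborel) = 1" using Ek_moment(2)[OF a, of 0] by simp
  have v1: "(\<integral>z. Ek a z * z \<partial>lborel) = 1 / a" using Ek_moment(2)[OF a, of 1] by simp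
  show ip: "integrable lborel (\<lambda>z. Ek a z * \<psi> z)"
    by (rule Bochner_Integration.integrable_bound[OF integrable_mult_right[OF i0, of B]])
       (use a bnd in \<open>auto simp: Ek_nonneg abs_mult mult.commute[of "Ek a _"] intro!: mult_right_mono order.trans[OF _ abs_ge_self]\<close>)
  define h where "h z = Ek a z * ((\<psi> z - c0) / \<epsilon> - z * s)" for z
  have heq: "h = (\<lambda>z. (Ek a z * \<psi> z) / \<epsilon> - (c0/\<epsilon>) * Ek a z - s * (Ek a z * z))"
    unfolding h_def by (auto simp: algebra_simps diff_divide_distrib)
  have hi: "integrable lborel h" unfolding heq
    using ip i0 i1 by simp
  have hv: "(\<integral>z. h z \<partial>lborel) = ((\<integral>z. Ek a z * \<psi> z \<partial>lborel) - c0) / \<epsilon> - s / a"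
  proof -
    have "(\<integral>z. h z \<partial>lborel) = (\<integral>z. (Ek a z * \<psi> z) / \<epsilon> - (c0/\<epsilon>) * Ek a z - s * (Ek a z * z) \<partial>lborel)"
      unfolding heq ..
    also have "\<dots> = (\<integral>z. Ek a z * \<psi> z \<partial>lborel) / \<epsilon> - (c0/\<epsilon>) * 1 - s * (1/a)"
      using ip i0 i1 v0 v1 by (simp add: Bochner_Integration.integral_diff)
    finally show ?thesis by (simp add: diff_divide_distrib)
  qed
  have "(1/\<epsilon>) * (a * ((\<integral>z. Ek a z * \<psi> z \<partial>lborel) - c0)) - s = a * (\<integral>z. h z \<partial>lborel)"
    using a e by (simp add: hv field_simps)
  then have "ennreal \<bar>(1/\<epsilon>) * (a * ((\<integral>z. Ek a z * \<psi> z \<partial>lborel) - c0)) - s\<bar> = ennreal a * ennreal (norm (\<integral>z. h z \<partial>lborel))"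
    using a by (simp add: abs_mult ennreal_mult)
  also have "\<dots> \<le> ennreal a * (\<integral>\<^sup>+z. ennreal (norm (h z)) \<partial>lborel)"
    by (intro mult_left_mono integral_norm_bound_ennreal hi) auto
  also have "(\<integral>\<^sup>+z. ennreal (norm (h z)) \<partial>lborel) = (\<integral>\<^sup>+z. ennreal (Ek a z * \<bar>(\<psi> z - c0) / \<epsilon> - z * s\<bar>) \<partial>lborel)"
    unfolding h_def using a by (intro nn_integral_cong) (simp add: abs_mult Ek_nonneg)
  finally show "ennreal \<bar>(1/\<epsilon>) * (a * ((\<integral>z. Ek a z * \<psi> z \<partial>lborel) - c0)) - s\<bar>
          \<le> ennreal a * (\<integral>\<^sup>+z. ennreal (Ek a z * \<bar>(\<psi> z - c0) / \<epsilon> - z * s\<bar>) \<partial>lborel)" .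
qed

definition wfun :: "real \<Rightarrow> real \<Rightarrow> real \<Rightarrow> real \<Rightarrow> 'v::real_normed_vector \<Rightarrow> real" where
  "wfun B1 B2 \<epsilon> z v = (z + z\<^sup>2) * (2 * B1 * norm v * min 1 (B2 / (2 * B1) * \<epsilon> * norm v))"

lemma D_bound:
  fixes \<phi> :: "'v::euclidean_space \<Rightarrow> real \<Rightarrow> real" and g :: "'v \<Rightarrow> real \<Rightarrow> 'v"
  assumes B1: "0 < B1" and B2: "0 < B2" and e: "0 < \<epsilon>" and z: "0 \<le> z"
    and L1: "\<And>x h t. \<bar>\<phi> (x + h) t - \<phi> x t\<bar> \<le> B1 * norm h"
    and gB: "\<And>x t. norm (g x t) \<le> B1"
    and L2: "\<And>x h t. \<bar>\<phi> (x + h) t - \<phi> x t - h \<bullet> g x t\<bar> \<le> B2 * (norm h)\<^sup>2"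
    and supp1: "\<And>x t. \<phi> x t \<noteq> 0 \<Longrightarrow> (x, t) \<in> K"
    and supp2: "\<And>x t. g x t \<noteq> 0 \<Longrightarrow> (x, t) \<in> K"
  shows "\<bar>(\<phi> (x + (\<epsilon> * z) *\<^sub>R v) t - \<phi> x t) / \<epsilon> - z * (v \<bullet> g x t)\<bar>
     \<le> wfun B1 B2 \<epsilon> z v * (indicator K (x, t) + indicator K (x + (\<epsilon> * z) *\<^sub>R v, t))"
proof -
  let ?h = "(\<epsilon> * z) *\<^sub>R v"
  define d where "d = (\<phi> (x + ?h) t - \<phi> x t) / \<epsilon> - z * (v \<bullet> g x t)"
  have wnn: "0 \<le> wfun B1 B2 \<epsilon> z v" unfolding wfun_def using B1 B2 e z by (auto intro!: mult_nonneg_nonneg)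
  have d1: "\<bar>d\<bar> \<le> 2 * B1 * z * norm v"
  proof -
    have "\<bar>(\<phi> (x + ?h) t - \<phi> x t) / \<epsilon>\<bar> \<le> B1 * z * norm v"
      using L1[of x ?h t] e z by (simp add: abs_mult divide_le_eq field_simps)
    moreover have "\<bar>z * (v \<bullet> g x t)\<bar> \<le> B1 * z * norm v"
    proof -
      have "\<bar>v \<bullet> g x t\<bar> \<le> norm v * norm (g x t)" by (rule Cauchy_Schwarz_ineq2)
      also have "\<dots> \<le> norm v * B1" using gB by (intro mult_left_mono) auto
      finally have "z * \<bar>v \<bullet> g x t\<bar> \<le> z * (B1 * norm v)" using z by (simp add: mult_left_mono mult.commute)
      then show ?thesis using z by (simp add: abs_mult ac_simps)
    qed
    ultimately show ?thesis unfolding d_def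
      using abs_triangle_ineq4[of "(\<phi> (x + ?h) t - \<phi> x t) / \<epsilon>" "z * (v \<bullet> g x t)"] by linarith
  qed
  have d2: "\<bar>d\<bar> \<le> B2 * \<epsilon> * z\<^sup>2 * (norm v)\<^sup>2"
  proof -
    have "d = (\<phi> (x + ?h) t - \<phi> x t - ?h \<bullet> g x t) / \<epsilon>"
      unfolding d_def using e by (simp add: field_simps)
    also have "\<bar>\<dots>\<bar> \<le> B2 * (norm ?h)\<^sup>2 / \<epsilon>"
      using L2[of x ?h t] e by (simp add: divide_right_mono)
    also have "\<dots> = B2 * \<epsilon> * z\<^sup>2 * (norm v)\<^sup>2" using e z by (simp add: power2_eq_square field_simps)
    finally show ?thesis .
  qed
  have dw: "\<bar>d\<bar> \<le> wfun B1 B2 \<epsilon> z v"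
  proof (cases "B2 / (2 * B1) * \<epsilon> * norm v \<le> 1")
    case True
    then have "wfun B1 B2 \<epsilon> z v = (z + z\<^sup>2) * (B2 * \<epsilon> * (norm v)\<^sup>2)"
      unfolding wfun_def using B1 by (simp add: power2_eq_square field_simps)
    also have "\<dots> \<ge> B2 * \<epsilon> * z\<^sup>2 * (norm v)\<^sup>2"
      using B2 e z by (simp add: algebra_simps mult_nonneg_nonneg)
    finally show ?thesis using d2 by linarith
  next
    case False
    then have "wfun B1 B2 \<epsilon> z v = (z + z\<^sup>2) * (2 * B1 * norm v)"
      unfolding wfun_def by simp
    also have "\<dots> \<ge> 2 * B1 * z * norm v"
      using B1 z by (simp add: algebra_simps mult_nonneg_nonneg)
    finally show ?thesis using d1 by linarith
  qed
  show ?thesis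
  proof (cases "(x, t) \<in> K \<or> (x + ?h, t) \<in> K")
    case True
    then have "1 \<le> (indicator K (x, t) + indicator K (x + ?h, t) :: real)"
      by (auto simp: indicator_def)
    then have "wfun B1 B2 \<epsilon> z v \<le> wfun B1 B2 \<epsilon> z v * (indicator K (x, t) + indicator K (x + ?h, t))"
      using wnn by (metis mult.right_neutral mult_left_mono)
    then show ?thesis using dw unfolding d_def by linarith
  next
    case False
    then have "\<phi> (x + ?h) t = 0" "\<phi> x t = 0" "g x t = 0" using supp1 supp2 by blast+
    then show ?thesis using False by simp
  qed
qed

lemma Psi_lim:
  fixes f :: "'v::euclidean_space \<Rightarrow> real"
  assumes fm[measurable]: "f \<in> borel_measurable lborel" and fnn: "\<And>v. 0 \<le> f v"
    and fi: "integrable lborel f" and c: "0 \<le> c"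
  shows "((\<lambda>\<epsilon>. \<integral>\<^sup>+v. ennreal (f v * min 1 (c * \<epsilon> * norm v)) \<partial>lborel) \<longlongrightarrow> 0) (at_right 0)"
proof -
  define Psi where "Psi \<epsilon> = (\<integral>\<^sup>+v. ennreal (f v * min 1 (c * \<epsilon> * norm v)) \<partial>lborel)" for \<epsilon>
  define h where "h i v = ennreal (f v * min 1 (c * (1 / Suc i) * norm v))" for i v
  have mono: "Psi \<epsilon> \<le> Psi \<delta>" if "0 \<le> \<epsilon>" "\<epsilon> \<le> \<delta>" for \<epsilon> \<delta>
    unfolding Psi_def using that c fnn
    by (intro nn_integral_mono ennreal_leI mult_left_mono min.mono mult_right_mono) auto
  have dec: "decseq h"
  proof (intro decseq_SucI le_funI)
    fix n v show "h (Suc n) v \<le> h n v" unfolding h_def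
      using c fnn by (auto intro!: ennreal_leI mult_left_mono min.mono mult_right_mono frac_le)
  qed
  have fin: "(\<integral>\<^sup>+ v. h i v \<partial>lborel) < \<infinity>" for i
  proof -
    have "(\<integral>\<^sup>+ v. h i v \<partial>lborel) \<le> (\<integral>\<^sup>+ v. ennreal (f v) \<partial>lborel)"
      unfolding h_def using fnn by (intro nn_integral_mono ennreal_leI) (auto intro!: mult_left_le)
    also have "\<dots> < \<infinity>" using fi fnn by (simp add: integrable_iff_bounded)
    finally show ?thesis .
  qed
  have hm: "h i \<in> borel_measurable lborel" for i unfolding h_def by measurable
  have inf0: "(INF i. h i v) = 0" for v
  proof -
    have "(\<lambda>i. h i v) \<longlonglongrightarrow> (INF i. h i v)"
      by (rule LIMSEQ_INF, rule decseq_SucI) (use decseq_SucD[OF dec] in \<open>auto simp: le_fun_def\<close>)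
    moreover have "(\<lambda>i. h i v) \<longlonglongrightarrow> ennreal (f v * min 1 (c * 0 * norm v))"
    proof -
      have l: "(\<lambda>x. 1 / real (Suc x)) \<longlonglongrightarrow> 0" using LIMSEQ_Suc[OF lim_1_over_n] by simp
      show ?thesis unfolding h_def by (intro tendsto_ennrealI tendsto_intros l)
    qed
    ultimately have "(INF i. h i v) = ennreal (f v * min 1 (c * 0 * norm v))" by (rule LIMSEQ_unique)
    then show ?thesis by simp
  qed
  have "(INF i. Psi (1 / Suc i)) = 0"
  proof -
    have "(INF i. Psi (1 / Suc i)) = (INF i. integral\<^sup>N lborel (h i))"
      unfolding Psi_def h_def by simp
    also have "\<dots> = (\<integral>\<^sup>+ v. (INF i. h i v) \<partial>lborel)"
      by (rule nn_integral_monotone_convergence_INF_decseq[symmetric, OF dec hm fin])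
    also have "\<dots> = 0" by (simp add: inf0)
    finally show ?thesis .
  qed
  show ?thesis unfolding Psi_def[symmetric]
  proof (rule order_tendstoI)
    fix e :: ennreal assume "e < 0" then show "\<forall>\<^sub>F x in at_right 0. e < Psi x" by simp
  next
    fix e :: ennreal assume e: "0 < e"
    have "(INF i. Psi (1 / Suc i)) < e" using e \<open>(INF i. Psi (1 / Suc i)) = 0\<close> by simp
    then obtain i where i: "Psi (1 / Suc i) < e" unfolding INF_less_iff by blast
    show "\<forall>\<^sub>F x in at_right 0. Psi x < e"
      unfolding eventually_at_right_field
    proof (rule exI[of _ "1 / Suc i"], intro conjI allI impI)
      fix y :: real assume "0 < y" "y < 1 / Suc i"
      then show "Psi y < e" using le_less_trans[OF mono[of y "1 / Suc i"] i] by simp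
    qed simp
  qed
qed

lemma chi_eq: "chi \<nu> \<phi> \<epsilon> x v t = (\<integral>z. Ek (\<nu> v) z * \<phi> (x + (\<epsilon> * z) *\<^sub>R v) t \<partial>lborel)"
  unfolding chi_def set_lebesgue_integral_def Ek_def by (simp add: ac_simps)

lemma pw_bound:
  fixes \<phi> :: "'v::euclidean_space \<Rightarrow> real \<Rightarrow> real" and g :: "'v \<Rightarrow> real \<Rightarrow> 'v"
    and \<nu> :: "'v \<Rightarrow> real" and lam :: "'v \<Rightarrow> 'v" and K :: "('v \<times> real) set"
  assumes contphi: "\<And>t. continuous_on UNIV (\<lambda>x. \<phi> x t)"
    and B0: "\<And>x t. \<bar>\<phi> x t\<bar> \<le> B0"
    and B1: "0 < B1" and B2: "0 < B2"
    and L1: "\<And>x h t. \<bar>\<phi> (x + h) t - \<phi> x t\<bar> \<le> B1 * norm h"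
    and gB: "\<And>x t. norm (g x t) \<le> B1"
    and L2: "\<And>x h t. \<bar>\<phi> (x + h) t - \<phi> x t - h \<bullet> g x t\<bar> \<le> B2 * (norm h)\<^sup>2"
    and supp1: "\<And>x t. \<phi> x t \<noteq> 0 \<Longrightarrow> (x, t) \<in> K"
    and supp2: "\<And>x t. g x t \<noteq> 0 \<Longrightarrow> (x, t) \<in> K"
    and Kc: "compact K"
    and num[measurable]: "\<nu> \<in> borel_measurable lborel" and nu1: "0 < \<nu>1"
    and nub: "\<And>v. \<nu>1 \<le> \<nu> v \<and> \<nu> v \<le> \<nu>2"
    and lamm[measurable]: "lam \<in> borel_measurable lborel"
    and lami: "integrable lborel (\<lambda>v. norm (lam v))"
    and lamvi: "integrable lborel (\<lambda>v. norm v * norm (lam v))"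
    and e: "0 < \<epsilon>"
  shows "ennreal (norm ((1/\<epsilon>) *\<^sub>R (\<integral>v. (\<nu> v * (chi \<nu> \<phi> \<epsilon> x v t - \<phi> x t)) *\<^sub>R lam v \<partial>lborel)
             - (\<integral>v. (v \<bullet> g x t) *\<^sub>R lam v \<partial>lborel)))
   \<le> (\<integral>\<^sup>+v. (\<integral>\<^sup>+z. ennreal (norm (lam v) * \<nu> v * Ek (\<nu> v) z * wfun B1 B2 \<epsilon> z v)
          * ennreal (indicator K (x, t) + indicator K (x + (\<epsilon> * z) *\<^sub>R v, t)) \<partial>lborel) \<partial>lborel)"
proof -
  have phim[measurable]: "(\<lambda>y. \<phi> y s) \<in> borel_measurable borel" for s
    using contphi by (rule borel_measurable_continuous_onI)
  have Kb[measurable]: "K \<in> sets borel" using Kc by (simp add: compact_imp_closed)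
  have nupos: "0 < \<nu> v" for v using nub[of v] nu1 by linarith
  have psic: "continuous_on UNIV (\<lambda>z. \<phi> (x + (\<epsilon> * z) *\<^sub>R v) t)" for v
    by (rule continuous_on_compose2[OF contphi[of t]]) (auto intro!: continuous_intros)
  have psii: "integrable lborel (\<lambda>z. Ek (\<nu> v) z * \<phi> (x + (\<epsilon> * z) *\<^sub>R v) t)" for v
    by (rule z_part(1)[OF nupos e psic B0])
  define chv where "chv v = chi \<nu> \<phi> \<epsilon> x v t" for v
  have chm[measurable]: "chv \<in> borel_measurable lborel"
    unfolding chv_def chi_eq by measurable
  have chb: "\<bar>chv v\<bar> \<le> B0" for v
  proof -
    have i0: "integrable lborel (\<lambda>z. Ek (\<nu> v) z)" using Ek_moment(1)[OF nupos, of v 0] by simp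
    have "\<bar>chv v\<bar> \<le> (\<integral>z. \<bar>Ek (\<nu> v) z * \<phi> (x + (\<epsilon> * z) *\<^sub>R v) t\<bar> \<partial>lborel)"
      unfolding chv_def chi_eq by (rule integral_abs_bound)
    also have "\<dots> \<le> (\<integral>z. B0 * Ek (\<nu> v) z \<partial>lborel)"
    proof (intro integral_mono integrable_mult_right i0 integrable_abs psii)
      fix z
      have "Ek (\<nu> v) z * \<bar>\<phi> (x + (\<epsilon> * z) *\<^sub>R v) t\<bar> \<le> Ek (\<nu> v) z * B0"
        by (intro mult_left_mono B0 Ek_nonneg less_imp_le[OF nupos])
      then show "\<bar>Ek (\<nu> v) z * \<phi> (x + (\<epsilon> * z) *\<^sub>R v) t\<bar> \<le> B0 * Ek (\<nu> v) z"
        by (simp add: abs_mult Ek_nonneg less_imp_le[OF nupos] mult.commute)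
    qed
    also have "\<dots> = B0" using Ek_moment(2)[OF nupos, of v 0] by simp
    finally show ?thesis .
  qed
  have B0nn: "0 \<le> B0" using B0[of x t] by linarith
  have iA: "integrable lborel (\<lambda>v. (\<nu> v * (chv v - \<phi> x t)) *\<^sub>R lam v)"
  proof (rule Bochner_Integration.integrable_bound[OF integrable_mult_right[OF lami, of "\<nu>2 * (2 * B0)"]])
    show "AE v in lborel. norm ((\<nu> v * (chv v - \<phi> x t)) *\<^sub>R lam v) \<le> norm (\<nu>2 * (2 * B0) * norm (lam v))"
    proof (intro AE_I2)
      fix v
      have "\<bar>\<nu> v * (chv v - \<phi> x t)\<bar> \<le> \<nu>2 * (2 * B0)"
        unfolding abs_mult using nub[of v] nupos[of v] chb[of v] B0[of x t]
        by (intro mult_mono) auto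
      then show "norm ((\<nu> v * (chv v - \<phi> x t)) *\<^sub>R lam v) \<le> norm (\<nu>2 * (2 * B0) * norm (lam v))"
        using nu1 nub[of v] B0nn by (auto intro!: mult_right_mono)
    qed
  qed measurable
  have iB: "integrable lborel (\<lambda>v. (v \<bullet> g x t) *\<^sub>R lam v)"
  proof (rule Bochner_Integration.integrable_bound[OF integrable_mult_right[OF lamvi, of "B1"]])
    show "AE v in lborel. norm ((v \<bullet> g x t) *\<^sub>R lam v) \<le> norm (B1 * (norm v * norm (lam v)))"
    proof (intro AE_I2)
      fix v
      have "\<bar>v \<bullet> g x t\<bar> \<le> norm v * B1"
        using Cauchy_Schwarz_ineq2[of v "g x t"] gB[of x t] by (meson mult_left_mono norm_ge_zero order_trans)
      then show "norm ((v \<bullet> g x t) *\<^sub>R lam v) \<le> norm (B1 * (norm v * norm (lam v)))"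
        using B1 mult_left_mono[OF \<open>\<bar>v \<bullet> g x t\<bar> \<le> norm v * B1\<close> norm_ge_zero[of "lam v"]]
        by (simp add: ac_simps abs_mult)
    qed
  qed measurable
  define J where "J v = (1/\<epsilon>) * (\<nu> v * (chv v - \<phi> x t)) - v \<bullet> g x t" for v
  have eq: "(1/\<epsilon>) *\<^sub>R (\<integral>v. (\<nu> v * (chv v - \<phi> x t)) *\<^sub>R lam v \<partial>lborel) - (\<integral>v. (v \<bullet> g x t) *\<^sub>R lam v \<partial>lborel)
      = (\<integral>v. J v *\<^sub>R lam v \<partial>lborel)"
  proof -
    have "(1/\<epsilon>) *\<^sub>R (\<integral>v. (\<nu> v * (chv v - \<phi> x t)) *\<^sub>R lam v \<partial>lborel)
        = (\<integral>v. ((1/\<epsilon>) * (\<nu> v * (chv v - \<phi> x t))) *\<^sub>R lam v \<partial>lborel)"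
      by (simp only: integral_scaleR_right[symmetric] scaleR_scaleR)
    moreover have "integrable lborel (\<lambda>v. ((1/\<epsilon>) * (\<nu> v * (chv v - \<phi> x t))) *\<^sub>R lam v)"
      using integrable_scaleR_right[OF iA, of "1/\<epsilon>"] by simp
    ultimately show ?thesis
      unfolding J_def scaleR_left_diff_distrib using iB
      by (simp add: Bochner_Integration.integral_diff)
  qed
  have iJ: "integrable lborel (\<lambda>v. J v *\<^sub>R lam v)"
    unfolding J_def scaleR_left_diff_distrib using iB integrable_scaleR_right[OF iA, of "1/\<epsilon>"]
    by simp
  have Jb: "ennreal \<bar>J v\<bar> \<le> ennreal (\<nu> v) * (\<integral>\<^sup>+z. ennreal (Ek (\<nu> v) z * wfun B1 B2 \<epsilon> z v)
          * ennreal (indicator K (x, t) + indicator K (x + (\<epsilon> * z) *\<^sub>R v, t)) \<partial>lborel)" for v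
  proof -
    have "ennreal \<bar>J v\<bar> \<le> ennreal (\<nu> v) * (\<integral>\<^sup>+z. ennreal (Ek (\<nu> v) z *
         \<bar>(\<phi> (x + (\<epsilon> * z) *\<^sub>R v) t - \<phi> x t) / \<epsilon> - z * (v \<bullet> g x t)\<bar>) \<partial>lborel)"
      unfolding J_def chv_def chi_eq by (rule z_part(2)[OF nupos e psic B0])
    also have "\<dots> \<le> ennreal (\<nu> v) * (\<integral>\<^sup>+z. ennreal (Ek (\<nu> v) z * wfun B1 B2 \<epsilon> z v)
          * ennreal (indicator K (x, t) + indicator K (x + (\<epsilon> * z) *\<^sub>R v, t)) \<partial>lborel)"
    proof (intro mult_left_mono nn_integral_mono)
      fix z :: real
      show "ennreal (Ek (\<nu> v) z * \<bar>(\<phi> (x + (\<epsilon> * z) *\<^sub>R v) t - \<phi> x t) / \<epsilon> - z * (v \<bullet> g x t)\<bar>)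
         \<le> ennreal (Ek (\<nu> v) z * wfun B1 B2 \<epsilon> z v) * ennreal (indicator K (x, t) + indicator K (x + (\<epsilon> * z) *\<^sub>R v, t))"
      proof (cases "0 \<le> z")
        case True
        have "Ek (\<nu> v) z * \<bar>(\<phi> (x + (\<epsilon> * z) *\<^sub>R v) t - \<phi> x t) / \<epsilon> - z * (v \<bullet> g x t)\<bar>
           \<le> Ek (\<nu> v) z * (wfun B1 B2 \<epsilon> z v * (indicator K (x, t) + indicator K (x + (\<epsilon> * z) *\<^sub>R v, t)))"
          by (intro mult_left_mono D_bound[OF B1 B2 e True L1 gB L2 supp1 supp2] Ek_nonneg less_imp_le[OF nupos])
        then have "ennreal (Ek (\<nu> v) z * \<bar>(\<phi> (x + (\<epsilon> * z) *\<^sub>R v) t - \<phi> x t) / \<epsilon> - z * (v \<bullet> g x t)\<bar>)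
           \<le> ennreal ((Ek (\<nu> v) z * wfun B1 B2 \<epsilon> z v) * (indicator K (x, t) + indicator K (x + (\<epsilon> * z) *\<^sub>R v, t)))"
          by (intro ennreal_leI) (simp add: ac_simps)
        also have "\<dots> = ennreal (Ek (\<nu> v) z * wfun B1 B2 \<epsilon> z v) * ennreal (indicator K (x, t) + indicator K (x + (\<epsilon> * z) *\<^sub>R v, t))"
          using B1 B2 e True nupos[of v]
          by (intro ennreal_mult mult_nonneg_nonneg Ek_nonneg) (auto simp: wfun_def)
        finally show ?thesis .
      next
        case False
        then show ?thesis by (simp add: Ek_def)
      qed
    qed simp
    finally show ?thesis .
  qed
  have "ennreal (norm ((1/\<epsilon>) *\<^sub>R (\<integral>v. (\<nu> v * (chv v - \<phi> x t)) *\<^sub>R lam v \<partial>lborel)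
             - (\<integral>v. (v \<bullet> g x t) *\<^sub>R lam v \<partial>lborel)))
      \<le> (\<integral>\<^sup>+v. ennreal (norm (J v *\<^sub>R lam v)) \<partial>lborel)"
    unfolding eq by (rule integral_norm_bound_ennreal[OF iJ])
  also have "\<dots> \<le> (\<integral>\<^sup>+v. (\<integral>\<^sup>+z. ennreal (norm (lam v) * \<nu> v * Ek (\<nu> v) z * wfun B1 B2 \<epsilon> z v)
          * ennreal (indicator K (x, t) + indicator K (x + (\<epsilon> * z) *\<^sub>R v, t)) \<partial>lborel) \<partial>lborel)"
  proof (intro nn_integral_mono)
    fix v
    have "ennreal (norm (J v *\<^sub>R lam v)) = ennreal (norm (lam v)) * ennreal \<bar>J v\<bar>"
      by (simp add: ennreal_mult' mult.commute)
    also have "\<dots> \<le> ennreal (norm (lam v)) * (ennreal (\<nu> v) * (\<integral>\<^sup>+z. ennreal (Ek (\<nu> v) z * wfun B1 B2 \<epsilon> z v)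
          * ennreal (indicator K (x, t) + indicator K (x + (\<epsilon> * z) *\<^sub>R v, t)) \<partial>lborel))"
      by (intro mult_left_mono Jb) simp
    also have "\<dots> = ennreal (norm (lam v) * \<nu> v) * (\<integral>\<^sup>+z. ennreal (Ek (\<nu> v) z * wfun B1 B2 \<epsilon> z v)
          * ennreal (indicator K (x, t) + indicator K (x + (\<epsilon> * z) *\<^sub>R v, t)) \<partial>lborel)"
      using ennreal_mult[OF norm_ge_zero less_imp_le[OF nupos], of "lam v" v] by (simp add: mult.assoc)
    also have "\<dots> = (\<integral>\<^sup>+z. ennreal (norm (lam v) * \<nu> v) * (ennreal (Ek (\<nu> v) z * wfun B1 B2 \<epsilon> z v)
          * ennreal (indicator K (x, t) + indicator K (x + (\<epsilon> * z) *\<^sub>R v, t))) \<partial>lborel)"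
      by (rule nn_integral_cmult[symmetric]) (unfold wfun_def, measurable)
    also have "\<dots> = (\<integral>\<^sup>+z. ennreal (norm (lam v) * \<nu> v * Ek (\<nu> v) z * wfun B1 B2 \<epsilon> z v)
          * ennreal (indicator K (x, t) + indicator K (x + (\<epsilon> * z) *\<^sub>R v, t)) \<partial>lborel)"
    proof (intro nn_integral_cong)
      fix z
      have "ennreal (norm (lam v) * \<nu> v * Ek (\<nu> v) z * wfun B1 B2 \<epsilon> z v)
          = ennreal (norm (lam v) * \<nu> v) * ennreal (Ek (\<nu> v) z * wfun B1 B2 \<epsilon> z v)"
        unfolding mult.assoc[of "norm (lam v) * \<nu> v"] using less_imp_le[OF nupos[of v]]
        by (intro ennreal_mult') simp
      then show "ennreal (norm (lam v) * \<nu> v) * (ennreal (Ek (\<nu> v) z * wfun B1 B2 \<epsilon> z v)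
          * ennreal (indicator K (x, t) + indicator K (x + (\<epsilon> * z) *\<^sub>R v, t))) =
         ennreal (norm (lam v) * \<nu> v * Ek (\<nu> v) z * wfun B1 B2 \<epsilon> z v)
          * ennreal (indicator K (x, t) + indicator K (x + (\<epsilon> * z) *\<^sub>R v, t))"
        by (simp only: mult.assoc)
    qed
    finally show "ennreal (norm (J v *\<^sub>R lam v)) \<le> \<dots>" .
  qed
  finally show ?thesis unfolding chv_def .
qed

lemma translate_nn:
  fixes K :: "'a::euclidean_space set" assumes [measurable]: "K \<in> sets borel"
  shows "(\<integral>\<^sup>+p. ennreal (indicator K (p + s)) \<partial>lborel) = emeasure lborel K"
proof -
  have "(\<integral>\<^sup>+p. ennreal (indicator K (p + s)) \<partial>lborel) = (\<integral>\<^sup>+p. ennreal (indicator K p) \<partial>(distr lborel borel ((+) s)))"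
    by (subst nn_integral_distr) (auto simp: add.commute)
  also have "\<dots> = emeasure lborel K" by (simp add: lborel_distr_plus ennreal_indicator)
  finally show ?thesis .
qed

lemma fubini_L2:
  fixes W :: "'v::euclidean_space \<Rightarrow> real \<Rightarrow> real" and K :: "('v \<times> real) set"
  assumes Wm[measurable]: "(\<lambda>(v, z). W v z) \<in> borel_measurable (lborel \<Otimes>\<^sub>M lborel)"
    and Km[measurable]: "K \<in> sets borel"
  shows "(\<integral>\<^sup>+p. (\<integral>\<^sup>+v. (\<integral>\<^sup>+z. ennreal (W v z) * ennreal (indicator K p + indicator K (p + ((\<epsilon> * z) *\<^sub>R v, 0)))
            \<partial>lborel) \<partial>lborel) \<partial>lborel)
       = (\<integral>\<^sup>+v. (\<integral>\<^sup>+z. ennreal (W v z) * (2 * emeasure lborel K) \<partial>lborel) \<partial>lborel)"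
proof -
  have Wm'[measurable]: "(\<lambda>x. W (f x) (g x)) \<in> borel_measurable M" if [measurable]: "f \<in> measurable M lborel" "g \<in> measurable M lborel" for f g and M :: "'c measure"
    using measurable_compose[OF measurable_Pair[OF that] Wm] by simp
  have "(\<integral>\<^sup>+p. (\<integral>\<^sup>+v. (\<integral>\<^sup>+z. ennreal (W v z) * ennreal (indicator K p + indicator K (p + ((\<epsilon> * z) *\<^sub>R v, 0)))
            \<partial>lborel) \<partial>lborel) \<partial>lborel)
     = (\<integral>\<^sup>+v. (\<integral>\<^sup>+p. (\<integral>\<^sup>+z. ennreal (W v z) * ennreal (indicator K p + indicator K (p + ((\<epsilon> * z) *\<^sub>R v, 0)))
            \<partial>lborel) \<partial>lborel) \<partial>lborel)"
    by (rule lborel_pair.Fubini'[symmetric]) measurable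
  also have "\<dots> = (\<integral>\<^sup>+v. (\<integral>\<^sup>+z. (\<integral>\<^sup>+p. ennreal (W v z) * ennreal (indicator K p + indicator K (p + ((\<epsilon> * z) *\<^sub>R v, 0)))
            \<partial>lborel) \<partial>lborel) \<partial>lborel)"
    by (intro nn_integral_cong lborel_pair.Fubini') measurable
  also have "\<dots> = (\<integral>\<^sup>+v. (\<integral>\<^sup>+z. ennreal (W v z) * (2 * emeasure lborel K) \<partial>lborel) \<partial>lborel)"
  proof (intro nn_integral_cong)
    fix v z
    have "(\<integral>\<^sup>+p. ennreal (W v z) * ennreal (indicator K p + indicator K (p + ((\<epsilon> * z) *\<^sub>R v, 0))) \<partial>lborel)
        = ennreal (W v z) * ((\<integral>\<^sup>+p. ennreal (indicator K p) \<partial>lborel) + (\<integral>\<^sup>+p. ennreal (indicator K (p + ((\<epsilon> * z) *\<^sub>R v, 0))) \<partial>lborel))"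
    proof -
      have "(\<integral>\<^sup>+p. ennreal (W v z) * ennreal (indicator K p + indicator K (p + ((\<epsilon> * z) *\<^sub>R v, 0))) \<partial>lborel)
        = (\<integral>\<^sup>+p. ennreal (W v z) * (ennreal (indicator K p) + ennreal (indicator K (p + ((\<epsilon> * z) *\<^sub>R v, 0)))) \<partial>lborel)"
        by (intro nn_integral_cong) (simp add: ennreal_plus)
      also have "\<dots> = ennreal (W v z) * (\<integral>\<^sup>+p. ennreal (indicator K p) + ennreal (indicator K (p + ((\<epsilon> * z) *\<^sub>R v, 0))) \<partial>lborel)"
        by (rule nn_integral_cmult) measurable
      also have "(\<integral>\<^sup>+p. ennreal (indicator K p) + ennreal (indicator K (p + ((\<epsilon> * z) *\<^sub>R v, 0))) \<partial>lborel)
          = (\<integral>\<^sup>+p. ennreal (indicator K p) \<partial>lborel) + (\<integral>\<^sup>+p. ennreal (indicator K (p + ((\<epsilon> * z) *\<^sub>R v, 0))) \<partial>lborel)"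
        by (rule nn_integral_add) measurable
      finally show ?thesis .
    qed
    also have "\<dots> = ennreal (W v z) * (2 * emeasure lborel K)"
      by (subst translate_nn) (simp_all add: mult_2 ennreal_indicator)
    finally show "(\<integral>\<^sup>+p. ennreal (W v z) * ennreal (indicator K p + indicator K (p + ((\<epsilon> * z) *\<^sub>R v, 0))) \<partial>lborel)
        = ennreal (W v z) * (2 * emeasure lborel K)" .
  qed
  finally show ?thesis .
qed


lemma Ek_moment_nn2:
  fixes a :: real assumes a: "0 < a"
  shows "(\<integral>\<^sup>+z. ennreal (Ek a z * z ^ i) \<partial>lborel) = ennreal (fact i / a ^ i)"
    using Ek_moment_nn[OF a] a by (simp add: ennreal_divide_times divide_ennreal[symmetric] ennreal_power)

lemma Phi_bound:
  fixes \<nu> :: "'v::euclidean_space \<Rightarrow> real" and lam :: "'v \<Rightarrow> 'v"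
  assumes num[measurable]: "\<nu> \<in> borel_measurable lborel" and nu1: "0 < \<nu>1"
    and nub: "\<And>v. \<nu>1 \<le> \<nu> v"
    and lamm[measurable]: "lam \<in> borel_measurable lborel"
    and B1: "0 < B1" and B2: "0 < B2" and e: "0 < \<epsilon>"
  shows "(\<integral>\<^sup>+v. (\<integral>\<^sup>+z. ennreal (norm (lam v) * \<nu> v * Ek (\<nu> v) z * wfun B1 B2 \<epsilon> z v) \<partial>lborel) \<partial>lborel)
    \<le> ennreal (2 * B1 * (1 + 2 / \<nu>1)) * (\<integral>\<^sup>+v. ennreal (norm (lam v) * norm v * min 1 (B2 / (2 * B1) * \<epsilon> * norm v)) \<partial>lborel)"
proof -
  have "(\<integral>\<^sup>+v. (\<integral>\<^sup>+z. ennreal (norm (lam v) * \<nu> v * Ek (\<nu> v) z * wfun B1 B2 \<epsilon> z v) \<partial>lborel) \<partial>lborel)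
     \<le> (\<integral>\<^sup>+v. ennreal (2 * B1 * (1 + 2 / \<nu>1)) * ennreal (norm (lam v) * norm v * min 1 (B2 / (2 * B1) * \<epsilon> * norm v)) \<partial>lborel)"
  proof (intro nn_integral_mono)
    fix v
    define a where "a = \<nu> v"
    have a: "0 < a" "\<nu>1 \<le> a" using nub[of v] nu1 unfolding a_def by auto
    define \<rho> where "\<rho> = 2 * B1 * norm v * min 1 (B2 / (2 * B1) * \<epsilon> * norm v)"
    have \<rho>: "0 \<le> \<rho>" unfolding \<rho>_def using B1 B2 e by auto
    define c where "c = norm (lam v) * a * \<rho>"
    have c: "0 \<le> c" unfolding c_def using a \<rho> by auto
    have "(\<integral>\<^sup>+z. ennreal (norm (lam v) * \<nu> v * Ek (\<nu> v) z * wfun B1 B2 \<epsilon> z v) \<partial>lborel)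
       = (\<integral>\<^sup>+z. ennreal c * (ennreal (Ek a z * z ^ 1) + ennreal (Ek a z * z ^ 2)) \<partial>lborel)"
    proof (intro nn_integral_cong)
      fix z
      have nn1: "0 \<le> Ek a z * z ^ 1" and nn2: "0 \<le> Ek a z * z ^ 2"
        using a by (auto simp: Ek_def indicator_def)
      have "norm (lam v) * \<nu> v * Ek (\<nu> v) z * wfun B1 B2 \<epsilon> z v = c * (Ek a z * z ^ 1 + Ek a z * z ^ 2)"
        unfolding c_def a_def \<rho>_def wfun_def by (simp add: algebra_simps power2_eq_square)
      then show "ennreal (norm (lam v) * \<nu> v * Ek (\<nu> v) z * wfun B1 B2 \<epsilon> z v) = ennreal c * (ennreal (Ek a z * z ^ 1) + ennreal (Ek a z * z ^ 2))"
        using nn1 nn2 c by (simp add: ennreal_mult ennreal_plus[symmetric] del: ennreal_plus)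
    qed
    also have "\<dots> = ennreal c * (\<integral>\<^sup>+z. ennreal (Ek a z * z ^ 1) + ennreal (Ek a z * z ^ 2) \<partial>lborel)"
      by (rule nn_integral_cmult) measurable
    also have "(\<integral>\<^sup>+z. ennreal (Ek a z * z ^ 1) + ennreal (Ek a z * z ^ 2) \<partial>lborel)
       = (\<integral>\<^sup>+z. ennreal (Ek a z * z ^ 1) \<partial>lborel) + (\<integral>\<^sup>+z. ennreal (Ek a z * z ^ 2) \<partial>lborel)"
      by (rule nn_integral_add; measurable)
    also have "ennreal c * ((\<integral>\<^sup>+z. ennreal (Ek a z * z ^ 1) \<partial>lborel) + (\<integral>\<^sup>+z. ennreal (Ek a z * z ^ 2) \<partial>lborel))
       = ennreal (c * (1 / a + 2 / a ^ 2))"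
    proof -
      have m1: "(\<integral>\<^sup>+z. ennreal (Ek a z * z ^ 1) \<partial>lborel) = ennreal (1 / a)"
        using Ek_moment_nn2[OF a(1), of 1] by simp
      have m2: "(\<integral>\<^sup>+z. ennreal (Ek a z * z ^ 2) \<partial>lborel) = ennreal (2 / a ^ 2)"
        using Ek_moment_nn2[OF a(1), of 2] by (simp add: numeral_2_eq_2)
      show ?thesis unfolding m1 m2 using a c
        by (subst ennreal_plus[symmetric]) (auto simp del: ennreal_plus intro!: ennreal_mult[symmetric])
    qed
    also have "\<dots> \<le> ennreal (2 * B1 * (1 + 2 / \<nu>1) * (norm (lam v) * norm v * min 1 (B2 / (2 * B1) * \<epsilon> * norm v)))"
    proof (intro ennreal_leI)
      have "c * (1 / a + 2 / a ^ 2) = norm (lam v) * \<rho> * (1 + 2 / a)"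
        unfolding c_def using a by (simp add: field_simps power2_eq_square)
      also have "\<dots> \<le> norm (lam v) * \<rho> * (1 + 2 / \<nu>1)"
        using a nu1 \<rho> by (intro mult_left_mono) (auto simp: frac_le)
      also have "\<dots> = 2 * B1 * (1 + 2 / \<nu>1) * (norm (lam v) * norm v * min 1 (B2 / (2 * B1) * \<epsilon> * norm v))"
        unfolding \<rho>_def by (simp add: ac_simps)
      finally show "c * (1 / a + 2 / a ^ 2) \<le> \<dots>" .
    qed
    also have "\<dots> = ennreal (2 * B1 * (1 + 2 / \<nu>1)) * ennreal (norm (lam v) * norm v * min 1 (B2 / (2 * B1) * \<epsilon> * norm v))"
      using B1 B2 e nu1 by (intro ennreal_mult) auto
    finally show "(\<integral>\<^sup>+z. ennreal (norm (lam v) * \<nu> v * Ek (\<nu> v) z * wfun B1 B2 \<epsilon> z v) \<partial>lborel) \<le> \<dots>" .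
  qed
  also have "\<dots> = ennreal (2 * B1 * (1 + 2 / \<nu>1)) * (\<integral>\<^sup>+v. ennreal (norm (lam v) * norm v * min 1 (B2 / (2 * B1) * \<epsilon> * norm v)) \<partial>lborel)"
    by (rule nn_integral_cmult) measurable
  finally show ?thesis .
qed

lemma core:
  fixes \<phi> :: "'v::euclidean_space \<Rightarrow> real \<Rightarrow> real" and g :: "'v \<Rightarrow> real \<Rightarrow> 'v"
    and \<nu> :: "'v \<Rightarrow> real" and lam :: "'v \<Rightarrow> 'v" and K :: "('v \<times> real) set"
  assumes contphi: "\<And>t. continuous_on UNIV (\<lambda>x. \<phi> x t)"
    and B0: "\<And>x t. \<bar>\<phi> x t\<bar> \<le> B0"
    and B1: "0 < B1" and B2: "0 < B2"
    and L1: "\<And>x h t. \<bar>\<phi> (x + h) t - \<phi> x t\<bar> \<le> B1 * norm h"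
    and gB: "\<And>x t. norm (g x t) \<le> B1"
    and L2: "\<And>x h t. \<bar>\<phi> (x + h) t - \<phi> x t - h \<bullet> g x t\<bar> \<le> B2 * (norm h)\<^sup>2"
    and supp1: "\<And>x t. \<phi> x t \<noteq> 0 \<Longrightarrow> (x, t) \<in> K"
    and supp2: "\<And>x t. g x t \<noteq> 0 \<Longrightarrow> (x, t) \<in> K"
    and Kc: "compact K"
    and num[measurable]: "\<nu> \<in> borel_measurable lborel" and nu1: "0 < \<nu>1"
    and nub: "\<And>v. \<nu>1 \<le> \<nu> v \<and> \<nu> v \<le> \<nu>2"
    and lamm[measurable]: "lam \<in> borel_measurable lborel"
    and lami: "integrable lborel (\<lambda>v. norm (lam v))"
    and lamvi: "integrable lborel (\<lambda>v. norm v * norm (lam v))"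
  defines "F \<equiv> (\<lambda>\<epsilon> (x, t). (1 / \<epsilon>) *\<^sub>R
              (\<integral>v. (\<nu> v * (chi \<nu> \<phi> \<epsilon> x v t - \<phi> x t)) *\<^sub>R lam v \<partial>lborel))"
  defines "G \<equiv> (\<lambda>(x, t). (\<integral>v. (v \<bullet> g x t) *\<^sub>R lam v \<partial>lborel))"
  shows "uniform_limit (UNIV \<times> {0<..}) F G (at_right 0)
       \<and> ((\<lambda>\<epsilon>. \<integral>\<^sup>+ p \<in> UNIV \<times> {0<..}. ennreal ((norm (F \<epsilon> p - G p))\<^sup>2) \<partial>lborel)
            \<longlongrightarrow> 0) (at_right 0)"
proof -
  have Kb[measurable]: "K \<in> sets borel" using Kc by (simp add: compact_imp_closed)
  have mKf: "emeasure lborel K < \<infinity>" using Kc by (rule emeasure_compact_finite)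
  define C0 where "C0 = 2 * B1 * (1 + 2 / \<nu>1)"
  define Psi where "Psi \<epsilon> = (\<integral>\<^sup>+v. ennreal (norm (lam v) * norm v * min 1 (B2 / (2 * B1) * \<epsilon> * norm v)) \<partial>lborel)" for \<epsilon>
  define T where "T \<epsilon> = ennreal C0 * Psi \<epsilon>" for \<epsilon>
  define W where "W \<epsilon> v z = norm (lam v) * \<nu> v * Ek (\<nu> v) z * wfun B1 B2 \<epsilon> z v" for \<epsilon> v z
  define Phi where "Phi \<epsilon> = (\<integral>\<^sup>+v. (\<integral>\<^sup>+z. ennreal (W \<epsilon> v z) \<partial>lborel) \<partial>lborel)" for \<epsilon>
  define S where "S \<epsilon> p = (\<integral>\<^sup>+v. (\<integral>\<^sup>+z. ennreal (W \<epsilon> v z) * ennreal (indicator K p + indicator K (p + ((\<epsilon> * z) *\<^sub>R v, 0)))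
            \<partial>lborel) \<partial>lborel)" for \<epsilon> p
  have Wm[measurable]: "(\<lambda>(v, z). W \<epsilon> v z) \<in> borel_measurable (lborel \<Otimes>\<^sub>M lborel)" for \<epsilon>
    unfolding W_def wfun_def by measurable
  have Wm'[measurable]: "(\<lambda>x. W \<epsilon> (f x) (h x)) \<in> borel_measurable M" if [measurable]: "f \<in> measurable M lborel" "h \<in> measurable M lborel" for f h \<epsilon> and M :: "'c measure"
    using measurable_compose[OF measurable_Pair[OF that] Wm] by simp
  have Tlim: "(T \<longlongrightarrow> 0) (at_right 0)"
  proof -
    have "(Psi \<longlongrightarrow> 0) (at_right 0)" unfolding Psi_def
      using Psi_lim[of "\<lambda>v. norm (lam v) * norm v" "B2 / (2 * B1)"] lamvi B1 B2
      by (simp add: ac_simps)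
    from ennreal_tendsto_cmult[OF _ this, of "ennreal C0"] show ?thesis unfolding T_def by simp
  qed
  have pw: "ennreal (norm (F \<epsilon> p - G p)) \<le> S \<epsilon> p" if e: "0 < \<epsilon>" for \<epsilon> p
  proof (cases p)
    case (Pair x t)
    show ?thesis unfolding Pair F_def G_def S_def W_def
      using pw_bound[OF contphi B0 B1 B2 L1 gB L2 supp1 supp2 Kc num nu1 nub lamm lami lamvi e, where x=x and t=t]
      by simp
  qed
  have S2: "S \<epsilon> p \<le> 2 * Phi \<epsilon>" for \<epsilon> p
  proof -
    have "S \<epsilon> p \<le> (\<integral>\<^sup>+v. (\<integral>\<^sup>+z. 2 * ennreal (W \<epsilon> v z) \<partial>lborel) \<partial>lborel)"
      unfolding S_def
    proof (intro nn_integral_mono)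
      fix v z
      have "ennreal (indicator K p + indicator K (p + ((\<epsilon> * z) *\<^sub>R v, 0))) \<le> 2"
        by (auto simp: indicator_def)
      then show "ennreal (W \<epsilon> v z) * ennreal (indicator K p + indicator K (p + ((\<epsilon> * z) *\<^sub>R v, 0))) \<le> 2 * ennreal (W \<epsilon> v z)"
        by (metis mult.commute mult_left_mono zero_le)
    qed
    also have "\<dots> = 2 * Phi \<epsilon>" unfolding Phi_def
      by (subst nn_integral_cmult[symmetric], measurable, intro nn_integral_cong nn_integral_cmult) measurable
    finally show ?thesis .
  qed
  have PhiT: "Phi \<epsilon> \<le> T \<epsilon>" if e: "0 < \<epsilon>" for \<epsilon>
    unfolding Phi_def T_def W_def Psi_def C0_def
    using Phi_bound[OF num nu1 _ lamm B1 B2 e] nub by blast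
  have intS: "(\<integral>\<^sup>+p. S \<epsilon> p \<partial>lborel) = Phi \<epsilon> * (2 * emeasure lborel K)" for \<epsilon>
  proof -
    have "(\<integral>\<^sup>+p. S \<epsilon> p \<partial>lborel) = (\<integral>\<^sup>+v. (\<integral>\<^sup>+z. ennreal (W \<epsilon> v z) * (2 * emeasure lborel K) \<partial>lborel) \<partial>lborel)"
      unfolding S_def by (rule fubini_L2[OF Wm Kb])
    also have "\<dots> = Phi \<epsilon> * (2 * emeasure lborel K)" unfolding Phi_def
      by (subst nn_integral_multc[symmetric], measurable, intro nn_integral_cong nn_integral_multc) measurable
    finally show ?thesis .
  qed
  have Sm[measurable]: "(\<lambda>p. S \<epsilon> p) \<in> borel_measurable lborel" for \<epsilon>
    unfolding S_def by measurable
  show ?thesis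
  proof
    show "uniform_limit (UNIV \<times> {0<..}) F G (at_right 0)"
    proof (rule uniform_limitI)
      fix e :: real assume e: "0 < e"
      have "\<forall>\<^sub>F \<epsilon> in at_right 0. 2 * T \<epsilon> < ennreal e"
      proof -
        have "((\<lambda>\<epsilon>. 2 * T \<epsilon>) \<longlongrightarrow> 2 * 0) (at_right 0)"
          by (rule ennreal_tendsto_cmult[OF _ Tlim]) simp
        then show ?thesis using e by (intro order_tendstoD(2)) auto
      qed
      then show "\<forall>\<^sub>F \<epsilon> in at_right 0. \<forall>p\<in>UNIV \<times> {0<..}. dist (F \<epsilon> p) (G p) < e"
        using eventually_at_right_less[of "0::real"]
      proof eventually_elim
        case (elim \<epsilon>)
        show ?case
        proof
          fix p :: "'v \<times> real"
          have "ennreal (norm (F \<epsilon> p - G p)) \<le> 2 * T \<epsilon>"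
            using pw[OF elim(2), of p] S2[of \<epsilon> p] PhiT[OF elim(2)]
            by (meson order_trans mult_left_mono zero_le)
          then have "ennreal (norm (F \<epsilon> p - G p)) < ennreal e" using elim(1) by (rule le_less_trans)
          then show "dist (F \<epsilon> p) (G p) < e" by (simp add: dist_norm ennreal_less_iff)
        qed
      qed
    qed
  next
    let ?L = "\<lambda>\<epsilon>. \<integral>\<^sup>+ p \<in> UNIV \<times> {0<..}. ennreal ((norm (F \<epsilon> p - G p))\<^sup>2) \<partial>lborel"
    define mK where "mK = emeasure lborel K"
    have bnd: "?L \<epsilon> \<le> (4 * mK) * T \<epsilon>" if e: "0 < \<epsilon>" and T1: "T \<epsilon> \<le> 1" for \<epsilon>
    proof -
      have "?L \<epsilon> \<le> (\<integral>\<^sup>+p. S \<epsilon> p * (2 * T \<epsilon>) \<partial>lborel)"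
      proof (intro nn_integral_mono)
        fix p :: "'v \<times> real"
        have a: "ennreal (norm (F \<epsilon> p - G p)) \<le> S \<epsilon> p" by (rule pw[OF e])
        have b: "S \<epsilon> p \<le> 2 * T \<epsilon>" using S2[of \<epsilon> p] PhiT[OF e]
          by (meson order_trans mult_left_mono zero_le)
        have "ennreal ((norm (F \<epsilon> p - G p))\<^sup>2) = ennreal (norm (F \<epsilon> p - G p)) * ennreal (norm (F \<epsilon> p - G p))"
          by (simp add: power2_eq_square ennreal_mult)
        also have "\<dots> \<le> S \<epsilon> p * S \<epsilon> p" using a by (intro mult_mono) auto
        also have "\<dots> \<le> S \<epsilon> p * (2 * T \<epsilon>)" using b by (intro mult_left_mono) auto
        finally show "ennreal ((norm (F \<epsilon> p - G p))\<^sup>2) * indicator (UNIV \<times> {0<..}) p \<le> S \<epsilon> p * (2 * T \<epsilon>)"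
          by (auto simp: indicator_def)
      qed
      also have "\<dots> = (\<integral>\<^sup>+p. S \<epsilon> p \<partial>lborel) * (2 * T \<epsilon>)"
        by (rule nn_integral_multc) measurable
      also have "\<dots> = Phi \<epsilon> * (2 * mK) * (2 * T \<epsilon>)" by (simp add: intS mK_def)
      also have "\<dots> \<le> T \<epsilon> * (2 * mK) * (2 * T \<epsilon>)" using PhiT[OF e] by (intro mult_right_mono) auto
      also have "\<dots> = (4 * mK) * (T \<epsilon> * T \<epsilon>)" by (simp add: ac_simps)
      also have "\<dots> \<le> (4 * mK) * T \<epsilon>" using T1 by (intro mult_left_mono) (auto intro: mult_left_le)
      finally show ?thesis .
    qed
    have lim4: "((\<lambda>\<epsilon>. (4 * mK) * T \<epsilon>) \<longlongrightarrow> (4 * mK) * 0) (at_right 0)"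
      by (rule ennreal_tendsto_cmult[OF _ Tlim]) (use mKf in \<open>simp add: mK_def ennreal_mult_less_top\<close>)
    have evT: "\<forall>\<^sub>F \<epsilon> in at_right 0. T \<epsilon> < 1"
      using Tlim by (intro order_tendstoD(2)) auto
    show "(?L \<longlongrightarrow> 0) (at_right 0)"
    proof (rule tendsto_sandwich[of "\<lambda>_. 0" _ _ "\<lambda>\<epsilon>. (4 * mK) * T \<epsilon>"])
      show "\<forall>\<^sub>F \<epsilon> in at_right 0. 0 \<le> ?L \<epsilon>" by simp
      show "\<forall>\<^sub>F \<epsilon> in at_right 0. ?L \<epsilon> \<le> (4 * mK) * T \<epsilon>"
        using evT eventually_at_right_less[of "0::real"]
        by eventually_elim (auto intro!: bnd)
    qed (use lim4 in auto)
  qed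
qed

lemma vanish_deriv:
  fixes h :: "'a::euclidean_space \<Rightarrow> real"
  assumes "closed K" "\<And>p. p \<notin> K \<Longrightarrow> h p = 0" "p \<notin> K"
  shows "frechet_derivative h (at p) = (\<lambda>_. 0)"
proof -
  have "((\<lambda>_. 0) has_derivative (\<lambda>_. 0)) (at p)" by (rule has_derivative_const)
  then have "(h has_derivative (\<lambda>_. 0)) (at p)"
    by (rule has_derivative_transform_within_open[where s="-K"]) (use assms in \<open>auto simp: open_Compl\<close>)
  then show ?thesis by (rule frechet_derivative_at[symmetric])
qed

lemma bounded_supp:
  fixes h :: "'a::euclidean_space \<Rightarrow> real"
  assumes "continuous_on UNIV h" "compact K" "\<And>p. p \<notin> K \<Longrightarrow> h p = 0"
  shows "\<exists>B\<ge>0. \<forall>p. \<bar>h p\<bar> \<le> B"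
proof -
  have "compact (h ` K)" by (rule compact_continuous_image[OF continuous_on_subset[OF assms(1)] assms(2)]) auto
  then obtain B where B: "\<forall>y\<in>h ` K. norm y \<le> B" using compact_imp_bounded bounded_iff by metis
  have "\<bar>h p\<bar> \<le> max B 0" for p
  proof (cases "p \<in> K")
    case True then show ?thesis using B by fastforce
  next
    case False then show ?thesis using assms(3) by simp
  qed
  then show ?thesis by (intro exI[of _ "max B 0"]) auto
qed

lemma lin_bound:
  fixes L :: "'a::euclidean_space \<Rightarrow> real" and B :: real
  assumes "linear L" "\<And>c. c \<in> Basis \<Longrightarrow> \<bar>L c\<bar> \<le> B"
  shows "\<bar>L k\<bar> \<le> (DIM('a) * B) * norm k"
proof -
  have "L k = (\<Sum>c\<in>Basis. (k \<bullet> c) * L c)"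
    using Linear_Algebra.linear_componentwise[OF assms(1), of k 1] by simp
  also have "\<bar>\<dots>\<bar> \<le> (\<Sum>c\<in>(Basis::'a set). \<bar>(k \<bullet> c) * L c\<bar>)" by (rule sum_abs)
  also have "\<dots> \<le> (\<Sum>c\<in>(Basis::'a set). norm k * B)"
    by (intro sum_mono) (auto simp: abs_mult intro!: mult_mono Basis_le_norm assms(2))
  also have "\<dots> = (DIM('a) * B) * norm k" by simp
  finally show ?thesis .
qed

lemma lip_from_partials:
  fixes h :: "'a::euclidean_space \<Rightarrow> real" and B :: real
  assumes d: "\<And>x. h differentiable (at x)" and B: "\<And>x c. c \<in> Basis \<Longrightarrow> \<bar>frechet_derivative h (at x) c\<bar> \<le> B"
  shows "\<bar>h q - h p\<bar> \<le> (DIM('a) * B) * norm (q - p)"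
proof -
  have "norm (h q - h p) \<le> (DIM('a) * B) * norm (q - p)"
  proof (rule differentiable_bound[where S=UNIV and f'="\<lambda>x. frechet_derivative h (at x)"])
    show "(h has_derivative frechet_derivative h (at x)) (at x within UNIV)" for x
      using d[of x] frechet_derivative_works by auto
    show "onorm (frechet_derivative h (at x)) \<le> DIM('a) * B" for x
    proof (rule onorm_le)
      fix k
      have "linear (frechet_derivative h (at x))"
        using d[of x] frechet_derivative_works has_derivative_linear by blast
      from lin_bound[OF this B] show "norm (frechet_derivative h (at x) k) \<le> DIM('a) * B * norm k" by simp
    qed
  qed auto
  then show ?thesis by simp
qed

lemma C2_facts:
  fixes f :: "'a::euclidean_space \<Rightarrow> real"
  assumes Ck: "Ck_on 2 UNIV f" and Kc: "compact K" and supp: "\<And>p. p \<notin> K \<Longrightarrow> f p = 0"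
  shows "\<exists>B0 B1 B2. 0 < B1 \<and> 0 < B2 \<and> (\<forall>p. \<bar>f p\<bar> \<le> B0) \<and> (\<forall>p. f differentiable (at p))
     \<and> (\<forall>p k. \<bar>frechet_derivative f (at p) k\<bar> \<le> B1 * norm k)
     \<and> (\<forall>p q k. \<bar>frechet_derivative f (at q) k - frechet_derivative f (at p) k\<bar> \<le> B2 * norm k * norm (q - p))
     \<and> (\<forall>p. linear (frechet_derivative f (at p)))
     \<and> (\<forall>p. p \<notin> K \<longrightarrow> frechet_derivative f (at p) = (\<lambda>_. 0))
     \<and> continuous_on UNIV f"
proof -
  define fd where "fd p = frechet_derivative f (at p)" for p
  define d2 where "d2 b p = frechet_derivative (\<lambda>x. fd x b) (at p)" for b p
  have Kcl: "closed K" using Kc by (rule compact_imp_closed)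
  from Ck have cf: "continuous_on UNIV f" and df: "\<And>p. f differentiable (at p)"
    and c1: "\<And>b. b \<in> Basis \<Longrightarrow> continuous_on UNIV (\<lambda>x. fd x b)"
    and d1: "\<And>b p. b \<in> Basis \<Longrightarrow> (\<lambda>x. fd x b) differentiable (at p)"
    and c2: "\<And>b c. b \<in> Basis \<Longrightarrow> c \<in> Basis \<Longrightarrow> continuous_on UNIV (\<lambda>x. d2 b x c)"
    by (auto simp: numeral_2_eq_2 fd_def d2_def)
  have lin: "linear (fd p)" for p
    using df[of p] frechet_derivative_works has_derivative_linear unfolding fd_def by blast
  have v1: "fd p = (\<lambda>_. 0)" if "p \<notin> K" for p
    unfolding fd_def by (rule vanish_deriv[OF Kcl supp that])
  have v2: "d2 b p = (\<lambda>_. 0)" if "p \<notin> K" for p b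
    unfolding d2_def by (rule vanish_deriv[OF Kcl _ that]) (simp add: v1)
  obtain B0 where B0: "\<And>p. \<bar>f p\<bar> \<le> B0" using bounded_supp[OF cf Kc supp] by blast
  have cc1: "continuous_on UNIV (\<lambda>p. \<Sum>b\<in>Basis. \<bar>fd p b\<bar>)"
    by (intro continuous_on_sum continuous_on_rabs c1)
  have cc2: "continuous_on UNIV (\<lambda>p. \<Sum>b\<in>Basis. \<Sum>c\<in>Basis. \<bar>d2 b p c\<bar>)"
    by (intro continuous_on_sum continuous_on_rabs c2)
  obtain Bp where Bp: "\<And>p. \<bar>\<Sum>b\<in>Basis. \<bar>fd p b\<bar>\<bar> \<le> Bp"
    using bounded_supp[OF cc1 Kc] v1 by fastforce
  obtain Bpp where Bpp: "\<And>p. \<bar>\<Sum>b\<in>Basis. \<Sum>c\<in>Basis. \<bar>d2 b p c\<bar>\<bar> \<le> Bpp"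
    using bounded_supp[OF cc2 Kc] v2 by fastforce
  have bp: "\<bar>fd p b\<bar> \<le> Bp" if "b \<in> Basis" for p b
  proof -
    have "\<bar>fd p b\<bar> \<le> (\<Sum>b\<in>Basis. \<bar>fd p b\<bar>)"
      by (rule member_le_sum[OF that]) auto
    then show ?thesis using Bp[of p] by linarith
  qed
  have bpp: "\<bar>d2 b p c\<bar> \<le> Bpp" if "b \<in> Basis" "c \<in> Basis" for p b c
  proof -
    have "\<bar>d2 b p c\<bar> \<le> (\<Sum>c\<in>Basis. \<bar>d2 b p c\<bar>)"
      by (rule member_le_sum[OF that(2)]) auto
    also have "\<dots> \<le> (\<Sum>b\<in>Basis. \<Sum>c\<in>Basis. \<bar>d2 b p c\<bar>)"
      by (rule member_le_sum[OF that(1)]) (auto intro: sum_nonneg)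
    finally show ?thesis using Bpp[of p] by linarith
  qed
  have Bp0: "0 \<le> Bp" using Bp[of undefined] by linarith
  have Bpp0: "0 \<le> Bpp" using Bpp[of undefined] by linarith
  define B1 where "B1 = DIM('a) * Bp + 1"
  define B2 where "B2 = DIM('a) * (DIM('a) * Bpp) + 1"
  have L1: "\<bar>fd p k\<bar> \<le> B1 * norm k" for p k
  proof -
    have "\<bar>fd p k\<bar> \<le> (DIM('a) * Bp) * norm k" by (rule lin_bound[OF lin bp])
    also have "\<dots> \<le> B1 * norm k" unfolding B1_def by (intro mult_right_mono) auto
    finally show ?thesis .
  qed
  have lipb: "\<bar>fd q b - fd p b\<bar> \<le> (DIM('a) * Bpp) * norm (q - p)" if b: "b \<in> Basis" for p q b
    by (rule lip_from_partials) (use d1[OF b] bpp[OF b] in \<open>auto simp: d2_def\<close>)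
  have L2: "\<bar>fd q k - fd p k\<bar> \<le> B2 * norm k * norm (q - p)" for p q k
  proof -
    have ll: "linear (\<lambda>k. fd q k - fd p k)" using lin[of q] lin[of p] by (rule linear_compose_sub)
    have "\<bar>fd q k - fd p k\<bar> \<le> (DIM('a) * ((DIM('a) * Bpp) * norm (q - p))) * norm k"
      by (rule lin_bound[OF ll lipb])
    also have "\<dots> \<le> B2 * norm k * norm (q - p)" unfolding B2_def
      by (simp add: algebra_simps mult_nonneg_nonneg Bpp0)
    finally show ?thesis .
  qed
  show ?thesis
    by (rule exI[of _ B0], rule exI[of _ B1], rule exI[of _ B2])
       (use B0 df L1 L2 lin v1 cf Bp0 Bpp0 in \<open>auto simp: fd_def B1_def B2_def add_nonneg_pos\<close>)
qed

lemma lip_f: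
  fixes f :: "'a::euclidean_space \<Rightarrow> real" and B :: real
  assumes d: "\<And>x. f differentiable (at x)" and B: "\<And>x k. \<bar>frechet_derivative f (at x) k\<bar> \<le> B * norm k"
  shows "\<bar>f q - f p\<bar> \<le> B * norm (q - p)"
proof -
  have "norm (f q - f p) \<le> B * norm (q - p)"
  proof (rule differentiable_bound[where S=UNIV and f'="\<lambda>x. frechet_derivative f (at x)"])
    show "(f has_derivative frechet_derivative f (at x)) (at x within UNIV)" for x
      using d[of x] frechet_derivative_works by auto
    show "onorm (frechet_derivative f (at x)) \<le> B" for x
      by (rule onorm_le) (use B in simp)
  qed auto
  then show ?thesis by simp
qed

lemma taylor2:
  fixes f :: "'a::euclidean_space \<Rightarrow> real" and B2 :: real
  assumes d: "\<And>x. f differentiable (at x)" and lin: "\<And>x. linear (frechet_derivative f (at x))"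
    and L: "\<And>p q k. \<bar>frechet_derivative f (at q) k - frechet_derivative f (at p) k\<bar> \<le> B2 * norm k * norm (q - p)"
    and B20: "0 \<le> B2"
  shows "\<bar>f (p + k) - f p - frechet_derivative f (at p) k\<bar> \<le> B2 * (norm k)\<^sup>2"
proof -
  define fd where "fd x = frechet_derivative f (at x)" for x
  define \<psi> where "\<psi> s = f (p + s *\<^sub>R k) - s * fd p k" for s :: real
  define \<psi>' where "\<psi>' s = (\<lambda>u::real. u * (fd (p + s *\<^sub>R k) k - fd p k))" for s
  have der: "(\<psi> has_derivative \<psi>' s) (at s within {0..1})" for s
  proof -
    have f1: "(f has_derivative fd (p + s *\<^sub>R k)) (at (p + s *\<^sub>R k))"
      using d frechet_derivative_works unfolding fd_def by blast
    have "((\<lambda>s. p + s *\<^sub>R k) has_derivative (\<lambda>u. u *\<^sub>R k)) (at s within {0..1})"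
      by (auto intro!: derivative_eq_intros)
    from has_derivative_compose[OF this f1]
    have "((\<lambda>s. f (p + s *\<^sub>R k)) has_derivative (\<lambda>u. fd (p + s *\<^sub>R k) (u *\<^sub>R k))) (at s within {0..1})" .
    moreover have "(\<lambda>u. fd (p + s *\<^sub>R k) (u *\<^sub>R k)) = (\<lambda>u. u * fd (p + s *\<^sub>R k) k)"
      using linear_cmul[OF lin[of "p + s *\<^sub>R k"]] unfolding fd_def by auto
    ultimately have "((\<lambda>s. f (p + s *\<^sub>R k)) has_derivative (\<lambda>u. u * fd (p + s *\<^sub>R k) k)) (at s within {0..1})" by simp
    then have "((\<lambda>s. f (p + s *\<^sub>R k) - s * fd p k) has_derivative (\<lambda>u. u * fd (p + s *\<^sub>R k) k - u * fd p k)) (at s within {0..1})"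
      by (auto intro!: derivative_eq_intros)
    then show ?thesis unfolding \<psi>_def \<psi>'_def by (simp add: right_diff_distrib)
  qed
  have ob: "onorm (\<psi>' s) \<le> B2 * (norm k)\<^sup>2" if s: "s \<in> {0..1}" for s
  proof (rule onorm_le)
    fix u :: real
    have "\<bar>fd (p + s *\<^sub>R k) k - fd p k\<bar> \<le> B2 * norm k * norm (s *\<^sub>R k)"
      using L[where p=p and q="p + s *\<^sub>R k" and k=k] unfolding fd_def by simp
    also have "\<dots> \<le> B2 * (norm k)\<^sup>2"
    proof -
      have "B2 * norm k * (s * norm k) \<le> B2 * norm k * (1 * norm k)"
        using s B20 by (intro mult_left_mono mult_right_mono) auto
      then show ?thesis using s by (simp add: power2_eq_square ac_simps)
    qed
    finally show "norm (\<psi>' s u) \<le> B2 * (norm k)\<^sup>2 * norm u"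
      unfolding \<psi>'_def by (simp add: abs_mult mult_left_mono mult.commute)
  qed
  have "norm (\<psi> 1 - \<psi> 0) \<le> B2 * (norm k)\<^sup>2 * norm (1 - 0::real)"
    by (rule differentiable_bound[OF convex_real_interval(5) der ob]) auto
  then show ?thesis unfolding \<psi>_def fd_def by simp
qed

lemma phi_facts:
  fixes \<phi> :: "'v::euclidean_space \<Rightarrow> real \<Rightarrow> real"
  assumes tf: "test_function \<phi>"
  shows "\<exists>B0 B1 B2 K. 0 < B1 \<and> 0 < B2 \<and> compact K \<and> (\<forall>t. continuous_on UNIV (\<lambda>x. \<phi> x t))
     \<and> (\<forall>x t. \<bar>\<phi> x t\<bar> \<le> B0)
     \<and> (\<forall>x h t. \<bar>\<phi> (x + h) t - \<phi> x t\<bar> \<le> B1 * norm h)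
     \<and> (\<forall>x t. norm (gradx \<phi> x t) \<le> B1)
     \<and> (\<forall>x h t. \<bar>\<phi> (x + h) t - \<phi> x t - h \<bullet> gradx \<phi> x t\<bar> \<le> B2 * (norm h)\<^sup>2)
     \<and> (\<forall>x t. \<phi> x t \<noteq> 0 \<longrightarrow> (x, t) \<in> K)
     \<and> (\<forall>x t. gradx \<phi> x t \<noteq> 0 \<longrightarrow> (x, t) \<in> K)"
proof -
  define f where "f = case_prod \<phi>"
  define K where "K = closure {p. f p \<noteq> 0}"
  have tf': "smooth_on UNIV (case_prod \<phi>) \<and> compact (closure {p. case_prod \<phi> p \<noteq> 0}) \<and>
      closure {p. case_prod \<phi> p \<noteq> 0} \<subseteq> UNIV \<times> {0<..}"
    using tf unfolding test_function_def .
  from tf' have sm: "smooth_on UNIV f" unfolding f_def by (rule conjunct1)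
  from tf' have Kc: "compact K" unfolding K_def f_def by (rule conjunct1[OF conjunct2])
  have Ck: "Ck_on 2 UNIV f" using sm[unfolded smooth_on_def, rule_format, of 2] .
  have sub: "{p. f p \<noteq> 0} \<subseteq> K" unfolding K_def by (rule closure_subset)
  have supp: "f p = 0" if "p \<notin> K" for p using that subsetD[OF sub, of p] by auto
  obtain B0 B1 B2 where B12: "0 < B1" "0 < B2" and fB0: "\<And>p. \<bar>f p\<bar> \<le> B0"
    and df: "\<And>p. f differentiable (at p)"
    and fL1: "\<And>p k. \<bar>frechet_derivative f (at p) k\<bar> \<le> B1 * norm k"
    and fL2: "\<And>p q k. \<bar>frechet_derivative f (at q) k - frechet_derivative f (at p) k\<bar> \<le> B2 * norm k * norm (q - p)"
    and lin: "\<And>p. linear (frechet_derivative f (at p))"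
    and van: "\<And>p. p \<notin> K \<Longrightarrow> frechet_derivative f (at p) = (\<lambda>_. 0)"
    and cf: "continuous_on UNIV f"
    using C2_facts[OF Ck Kc supp] by blast
  define fd where "fd p = frechet_derivative f (at p)" for p
  have partial: "frechet_derivative (\<lambda>y. \<phi> y t) (at x) = (\<lambda>h. fd (x, t) (h, 0))" for x t
  proof -
    have f1: "(f has_derivative fd (x, t)) (at (x, t))"
      using df frechet_derivative_works unfolding fd_def by blast
    have "((\<lambda>y. (y, t)) has_derivative (\<lambda>h. (h, 0))) (at x)"
      by (auto intro!: derivative_eq_intros)
    from has_derivative_compose[OF this f1]
    have "((\<lambda>y. f (y, t)) has_derivative (\<lambda>h. fd (x, t) (h, 0))) (at x)" .
    then show ?thesis unfolding f_def by (simp add: frechet_derivative_at[symmetric])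
  qed
  have linx: "linear (\<lambda>h. fd (x, t) (h, 0))" for x t
  proof -
    have "linear (\<lambda>h::'v. (h, 0::real))" by (simp add: linear_iff)
    from linear_compose[OF this lin[of "(x, t)"]] show ?thesis by (simp add: fd_def o_def)
  qed
  have hg: "h \<bullet> gradx \<phi> x t = fd (x, t) (h, 0)" for x h t
  proof -
    have "fd (x, t) (h, 0) = (\<Sum>b\<in>Basis. (h \<bullet> b) * fd (x, t) (b, 0))"
      using Linear_Algebra.linear_componentwise[OF linx[of x t], of h 1] by simp
    also have "\<dots> = h \<bullet> gradx \<phi> x t"
      unfolding gradx_def partial by (simp add: inner_sum_right mult.commute)
    finally show ?thesis by simp
  qed
  show ?thesis
  proof (intro exI conjI allI impI)
    show "0 < B1" "0 < B2" "compact K" using B12 Kc by auto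
    show "continuous_on UNIV (\<lambda>x. \<phi> x t)" for t
    proof -
      have "continuous_on UNIV (\<lambda>x::'v. (x, t))" by (intro continuous_on_Pair continuous_on_id continuous_on_const)
      from continuous_on_compose2[OF cf this] show ?thesis by (simp add: f_def)
    qed
    show "\<bar>\<phi> x t\<bar> \<le> B0" for x t using fB0[of "(x, t)"] by (simp add: f_def)
    show "\<bar>\<phi> (x + h) t - \<phi> x t\<bar> \<le> B1 * norm h" for x h t
      using lip_f[OF df fL1, of "(x + h, t)" "(x, t)"] by (simp add: f_def)
    show "norm (gradx \<phi> x t) \<le> B1" for x t
    proof -
      let ?g = "gradx \<phi> x t"
      have "(norm ?g)\<^sup>2 = ?g \<bullet> ?g" by (simp add: power2_norm_eq_inner)
      also have "\<dots> = fd (x, t) (?g, 0)" by (rule hg)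
      also have "\<dots> \<le> B1 * norm ?g" using fL1[of "(x, t)" "(?g, 0)"] by (simp add: fd_def)
      finally have "norm ?g * norm ?g \<le> B1 * norm ?g" by (simp add: power2_eq_square)
      then show ?thesis by (cases "norm ?g = 0") (use B12 in auto)
    qed
    show "\<bar>\<phi> (x + h) t - \<phi> x t - h \<bullet> gradx \<phi> x t\<bar> \<le> B2 * (norm h)\<^sup>2" for x h t
      using taylor2[OF df lin fL2, of "(x, t)" "(h, 0)"] B12 by (simp add: hg fd_def f_def)
    show "(x, t) \<in> K" if "\<phi> x t \<noteq> 0" for x t using supp[of "(x, t)"] that by (auto simp: f_def)
    show "(x, t) \<in> K" if "gradx \<phi> x t \<noteq> 0" for x t
    proof (rule ccontr)
      assume "(x, t) \<notin> K"
      then have "frechet_derivative f (at (x, t)) = (\<lambda>_. 0)" by (rule van)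
      then have "gradx \<phi> x t = 0" unfolding gradx_def partial fd_def by simp
      with that show False by simp
    qed
  qed
qed

lemma T1:
  fixes \<beta> :: real assumes b: "1 < \<beta>"
  shows "(\<integral>\<^sup>+x. ennreal ((1 + \<bar>x\<bar>) powr (- \<beta>)) \<partial>lborel) < \<infinity>"
proof -
  define g where "g x = ennreal ((1 + x) powr (- \<beta>)) * indicator {0..} x" for x :: real
  have gm[measurable]: "g \<in> borel_measurable borel" unfolding g_def by measurable
  have "(\<integral>\<^sup>+x. g x \<partial>lborel) \<le> (\<integral>\<^sup>+x. indicator {0..1} x + ennreal (x powr (- \<beta>)) * indicator {1..} x \<partial>lborel)"
  proof (intro nn_integral_mono)
    fix x :: real
    show "g x \<le> indicator {0..1} x + ennreal (x powr (- \<beta>)) * indicator {1..} x"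
    proof (cases "x < 0")
      case True then show ?thesis by (simp add: g_def)
    next
      case False
      show ?thesis
      proof (cases "x \<le> 1")
        case True
        have "1 \<le> (1 + x) powr \<beta>" by (rule ge_one_powr_ge_zero) (use False b in auto)
        then have "(1 + x) powr (- \<beta>) \<le> 1" by (simp add: powr_minus inverse_le_1_iff)
        then have "ennreal ((1 + x) powr (- \<beta>)) \<le> 1" by (simp add: ennreal_le_1)
        then show ?thesis using True False by (auto simp: g_def intro: order_trans[OF _ add_increasing2[OF zero_le order_refl]])
      next
        case x1: False
        have "(1 + x) powr (- \<beta>) \<le> x powr (- \<beta>)" using x1 b by (intro powr_mono2') auto
        then show ?thesis using x1 False by (auto simp: g_def intro!: add_increasing ennreal_leI)
      qed
    qed
  qed
  also have "\<dots> = (\<integral>\<^sup>+x. indicator {0..1::real} x \<partial>lborel) + (\<integral>\<^sup>+x. ennreal (x powr (- \<beta>)) * indicator {1..} x \<partial>lborel)"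
    by (rule nn_integral_add) measurable
  also have "(\<integral>\<^sup>+x. ennreal (x powr (- \<beta>)) * indicator {1..} x \<partial>lborel) = ennreal (- (1 powr (- \<beta> + 1)) / (- \<beta> + 1))"
    by (rule nn_integral_has_integral_lebesgue'[OF _ has_integral_powr_to_inf]) (use b in auto)
  finally have gfin: "(\<integral>\<^sup>+x. g x \<partial>lborel) < \<infinity>"
    by (auto simp: less_top[symmetric] top_unique ennreal_add_eq_top)
  have "(\<integral>\<^sup>+x. ennreal ((1 + \<bar>x\<bar>) powr (- \<beta>)) \<partial>lborel) \<le> (\<integral>\<^sup>+x. g x + g (0 + (-1) * x) \<partial>lborel)"
    by (intro nn_integral_mono) (auto simp: g_def indicator_def)
  also have "\<dots> = (\<integral>\<^sup>+x. g x \<partial>lborel) + (\<integral>\<^sup>+x. g (0 + (-1) * x) \<partial>lborel)"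
    by (rule nn_integral_add) measurable
  also have "(\<integral>\<^sup>+x. g (0 + (-1) * x) \<partial>lborel) = (\<integral>\<^sup>+x. g x \<partial>lborel)"
    using nn_integral_real_affine[OF gm, of "-1" 0] by simp
  finally show ?thesis using gfin by (auto simp: less_top[symmetric] top_unique ennreal_add_eq_top)
qed

lemma T2:
  fixes \<beta> :: real assumes b: "1 < \<beta>"
  shows "integrable lborel (\<lambda>v::'v::euclidean_space. \<Prod>b\<in>Basis. (1 + \<bar>v \<bullet> b\<bar>) powr (- \<beta>))"
proof -
  obtain c where c: "0 \<le> c" "(\<integral>\<^sup>+x. ennreal ((1 + \<bar>x\<bar>) powr (- \<beta>)) \<partial>lborel) = ennreal c"
  proof (cases "(\<integral>\<^sup>+x. ennreal ((1 + \<bar>x\<bar>) powr (- \<beta>)) \<partial>lborel)" rule: ennreal_cases)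
    case (real r) then show ?thesis using that by blast
  next
    case top then show ?thesis using T1[OF b] by simp
  qed
  have "(\<integral>\<^sup>+v. ennreal (norm (\<Prod>b\<in>Basis. (1 + \<bar>(v::'v) \<bullet> b\<bar>) powr (- \<beta>))) \<partial>lborel)
      = (\<integral>\<^sup>+v. (\<Prod>b\<in>Basis. ennreal ((1 + \<bar>(v::'v) \<bullet> b\<bar>) powr (- \<beta>))) \<partial>lborel)"
    by (intro nn_integral_cong) (simp add: prod_ennreal prod_nonneg abs_prod)
  also have "\<dots> = (\<Prod>b\<in>(Basis::'v set). (\<integral>\<^sup>+x. ennreal ((1 + \<bar>x\<bar>) powr (- \<beta>)) \<partial>lborel))"
    by (rule nn_integral_lborel_prod[where f="\<lambda>b x. ennreal ((1 + \<bar>x\<bar>) powr (- \<beta>))"]) auto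
  also have "\<dots> = ennreal (c ^ DIM('v))" using c by (simp add: ennreal_power)
  finally show ?thesis
    by (intro integrableI_bounded) auto
qed

lemma T3:
  fixes v :: "'v::euclidean_space" and \<alpha> :: real
  assumes v: "1 \<le> norm v" and a: "1 < \<alpha>"
  shows "norm v powr (- (DIM('v) + \<alpha> - 1)) \<le> 2 powr (DIM('v) + \<alpha> - 1) *
           (\<Prod>b\<in>Basis. (1 + \<bar>v \<bullet> b\<bar>) powr (- ((DIM('v) + \<alpha> - 1) / DIM('v))))"
proof -
  define d where "d = real DIM('v)"
  define s where "s = d + \<alpha> - 1"
  define \<beta> where "\<beta> = s / d"
  have d: "1 \<le> d" unfolding d_def using DIM_positive[where 'a='v] by linarith
  have s: "0 < s" unfolding s_def using d a by simp
  have sb: "\<beta> * d = s" unfolding \<beta>_def using d by simp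
  have xb: "1 + \<bar>v \<bullet> b\<bar> \<le> 2 * norm v" if "b \<in> Basis" for b
    using Basis_le_norm[OF that, of v] v by linarith
  have pp: "(\<Prod>b\<in>(Basis::'v set). 1 + \<bar>v \<bullet> b\<bar>) \<le> (2 * norm v) ^ DIM('v)"
    using prod_mono[of Basis "\<lambda>b. 1 + \<bar>v \<bullet> b\<bar>" "\<lambda>_. 2 * norm v"] xb by simp
  have ppos: "0 < (\<Prod>b\<in>(Basis::'v set). 1 + \<bar>v \<bullet> b\<bar>)" by (intro prod_pos) auto
  have "(\<Prod>b\<in>Basis. (1 + \<bar>v \<bullet> b\<bar>) powr (- \<beta>)) = (\<Prod>b\<in>(Basis::'v set). 1 + \<bar>v \<bullet> b\<bar>) powr (- \<beta>)"
    by (rule prod_powr_distrib[symmetric])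
  also have "\<dots> \<ge> ((2 * norm v) ^ DIM('v)) powr (- \<beta>)"
    by (rule powr_mono2'[OF _ ppos pp]) (use s d in \<open>auto simp: \<beta>_def\<close>)
  also have "((2 * norm v) ^ DIM('v)) powr (- \<beta>) = (2 * norm v) powr (- s)"
  proof -
    have "((2 * norm v) ^ DIM('v)) powr (- \<beta>) = ((2 * norm v) powr d) powr (- \<beta>)"
      using v unfolding d_def by (subst powr_realpow) auto
    also have "\<dots> = (2 * norm v) powr (d * (- \<beta>))" by (rule powr_powr)
    also have "d * (- \<beta>) = - s" using sb by (simp add: mult.commute)
    finally show ?thesis .
  qed
  also have "\<dots> = 2 powr (- s) * norm v powr (- s)" using v by (simp add: powr_mult)
  finally have "2 powr (- s) * norm v powr (- s) \<le> (\<Prod>b\<in>Basis. (1 + \<bar>v \<bullet> b\<bar>) powr (- \<beta>))" .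
  then have "2 powr s * (2 powr (- s) * norm v powr (- s)) \<le> 2 powr s * (\<Prod>b\<in>Basis. (1 + \<bar>v \<bullet> b\<bar>) powr (- \<beta>))"
    by (intro mult_left_mono) auto
  moreover have "2 powr s * (2 powr (- s) * norm v powr (- s)) = norm v powr (- s)"
    by (simp add: mult.assoc[symmetric] powr_add[symmetric])
  ultimately have "norm v powr (- s) \<le> 2 powr s * (\<Prod>b\<in>Basis. (1 + \<bar>v \<bullet> b\<bar>) powr (- \<beta>))" by simp
  then show ?thesis unfolding s_def \<beta>_def d_def .
qed

lemma tail_int:
  fixes M :: "'v::euclidean_space \<Rightarrow> real" and \<alpha> \<gamma> :: real
  assumes Mm[measurable]: "M \<in> borel_measurable lborel" and Mnn: "\<And>v. 0 \<le> M v"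
    and Mi: "integrable lborel M" and a: "1 < \<alpha>"
    and tail: "((\<lambda>v. norm v powr (real DIM('v) + \<alpha>) * M v) \<longlongrightarrow> \<gamma>) at_infinity"
  shows "integrable lborel (\<lambda>v. norm v * M v)"
proof -
  have "\<forall>\<^sub>F v in at_infinity. norm v powr (real DIM('v) + \<alpha>) * M v < \<gamma> + 1"
    using tail by (rule order_tendstoD(2)) simp
  then obtain R0 where R0: "\<And>v. R0 \<le> norm v \<Longrightarrow> norm v powr (real DIM('v) + \<alpha>) * M v < \<gamma> + 1"
    unfolding eventually_at_infinity by blast
  define R where "R = max R0 1"
  define s where "s = real DIM('v) + \<alpha> - 1"
  define \<beta> where "\<beta> = s / real DIM('v)"
  define P where "P v = (\<Prod>b\<in>Basis. (1 + \<bar>v \<bullet> b\<bar>) powr (- \<beta>))" for v :: 'v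
  have d: "1 \<le> real DIM('v)" using DIM_positive[where 'a='v] by linarith
  have b1: "1 < \<beta>" unfolding \<beta>_def s_def using d a by (simp add: field_simps)
  have Pi: "integrable lborel P" unfolding P_def by (rule T2[OF b1])
  have g0: "0 \<le> \<gamma> + 1"
  proof -
    obtain v :: 'v where v: "norm v = max R0 0"
      using vector_choose_size[of "max R0 0"] by auto
    then have "norm v powr (real DIM('v) + \<alpha>) * M v < \<gamma> + 1" by (intro R0) simp
    moreover have "0 \<le> norm v powr (real DIM('v) + \<alpha>) * M v" using Mnn[of v] by simp
    ultimately show ?thesis by linarith
  qed
  have bound: "norm (norm v * M v) \<le> norm (R * M v + ((\<gamma> + 1) * 2 powr s) * P v)" for v
  proof -
    have Pnn: "0 \<le> P v" unfolding P_def by (intro prod_nonneg) auto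
    have R1: "1 \<le> R" unfolding R_def by simp
    have "norm v * M v \<le> R * M v + ((\<gamma> + 1) * 2 powr s) * P v"
    proof (cases "norm v < R")
      case True
      then have "norm v * M v \<le> R * M v" using Mnn by (intro mult_right_mono) auto
      moreover have "0 \<le> ((\<gamma> + 1) * 2 powr s) * P v" using g0 Pnn by simp
      ultimately show ?thesis by linarith
    next
      case False
      then have vR: "R \<le> norm v" by simp
      have v1: "1 \<le> norm v" using vR R1 by linarith
      have vpos: "0 < norm v" using v1 by linarith
      have "norm v powr (real DIM('v) + \<alpha>) * M v < \<gamma> + 1" using R0 vR unfolding R_def by simp
      then have "M v \<le> (\<gamma> + 1) / norm v powr (real DIM('v) + \<alpha>)"
        using vpos by (simp add: field_simps)
      then have "norm v * M v \<le> norm v * ((\<gamma> + 1) / norm v powr (real DIM('v) + \<alpha>))"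
        using vpos by (intro mult_left_mono) auto
      also have "\<dots> = (\<gamma> + 1) * norm v powr (- s)"
        using vpos unfolding s_def by (simp add: powr_minus powr_diff powr_add field_simps)
      also have "\<dots> \<le> (\<gamma> + 1) * (2 powr s * P v)"
        using T3[OF v1 a] g0 unfolding P_def s_def \<beta>_def by (intro mult_left_mono) auto
      finally have "norm v * M v \<le> ((\<gamma> + 1) * 2 powr s) * P v" by (simp add: ac_simps)
      moreover have "0 \<le> R * M v" using R1 Mnn by simp
      ultimately show ?thesis by linarith
    qed
    moreover have "0 \<le> norm v * M v" using Mnn by simp
    ultimately show ?thesis by simp
  qed
  show ?thesis
    by (rule Bochner_Integration.integrable_bound[OF _ _ AE_I2[OF bound]])
       (use Mi Pi in \<open>auto intro!: Bochner_Integration.integrable_add integrable_mult_right\<close>)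
qed

lemma lam_facts:
  fixes M :: "'v::euclidean_space \<Rightarrow> real"
    and gradM :: "'v \<Rightarrow> 'v"
    and \<sigma> :: "'v \<Rightarrow> 'v \<Rightarrow> real"
    and lam :: "'v \<Rightarrow> 'v"
    and \<alpha> \<gamma> C \<nu>1 \<nu>2 :: real
  assumes alpha: "1 < \<alpha>"
    and M_pos: "\<And>v. M v > 0"
    and M_int: "integrable lborel M" "(\<integral>v. M v \<partial>lborel) = 1"
    and M_tail: "((\<lambda>v. norm v powr (real DIM('v) + \<alpha>) * M v) \<longlongrightarrow> \<gamma>) at_infinity"
    and M_grad: "\<And>v. (M has_derivative (\<lambda>h. gradM v \<bullet> h)) (at v)"
    and M_grad_bound: "\<And>v. norm (gradM v) \<le> C * M v / (1 + norm v)"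
    and sigma_meas: "(\<lambda>p. \<sigma> (fst p) (snd p)) \<in> borel_measurable borel"
    and sigma_bounds: "0 < \<nu>1" "\<And>v v'. \<nu>1 \<le> \<sigma> v v' \<and> \<sigma> v v' \<le> \<nu>2"
    and lambda_meas: "lam \<in> borel_measurable lborel"
    and lambda_L2: "integrable lborel (\<lambda>v. (norm (lam v))\<^sup>2 / M v)"
    and lambda_eq: "AE v in lborel. Qop \<sigma> M lam v = gradM v"
  shows "coll_freq \<sigma> M \<in> borel_measurable lborel \<and> (\<forall>v. \<nu>1 \<le> coll_freq \<sigma> M v \<and> coll_freq \<sigma> M v \<le> \<nu>2)
    \<and> integrable lborel (\<lambda>v. norm (lam v)) \<and> integrable lborel (\<lambda>v. norm v * norm (lam v))"
proof -
  note [measurable] = lambda_meas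
  have Mc: "continuous_on UNIV M"
    by (intro continuous_at_imp_continuous_on ballI has_derivative_continuous[OF M_grad])
  have Mm[measurable]: "M \<in> borel_measurable lborel"
    using borel_measurable_continuous_onI[OF Mc] by simp
  have Mb[measurable]: "M \<in> borel_measurable borel" using borel_measurable_continuous_onI[OF Mc] .
  have swapm: "(\<lambda>p::'v \<times> 'v. (snd p, fst p)) \<in> borel_measurable borel"
    by (intro borel_measurable_continuous_onI continuous_intros)
  have sw: "(\<lambda>p::'v \<times> 'v. \<sigma> (snd p) (fst p)) \<in> borel_measurable borel"
    using measurable_compose[OF swapm sigma_meas] by simp
  have sw2[measurable]: "(\<lambda>p::'v \<times> 'v. \<sigma> (snd p) (fst p)) \<in> borel_measurable (lborel \<Otimes>\<^sub>M lborel)"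
    using sw by (simp add: lborel_prod)
  have s1[measurable]: "(\<lambda>v'. \<sigma> v' v) \<in> borel_measurable lborel" for v
  proof -
    have "(\<lambda>v'::'v. (v', v)) \<in> borel_measurable borel" by (intro borel_measurable_continuous_onI continuous_intros)
    from measurable_compose[OF this sigma_meas] show ?thesis by simp
  qed
  have s2[measurable]: "(\<lambda>v'. \<sigma> v v') \<in> borel_measurable lborel" for v
  proof -
    have "(\<lambda>v'::'v. (v, v')) \<in> borel_measurable borel" by (intro borel_measurable_continuous_onI continuous_intros)
    from measurable_compose[OF this sigma_meas] show ?thesis by simp
  qed
  define \<nu> where "\<nu> = coll_freq \<sigma> M"
  have num: "\<nu> \<in> borel_measurable lborel"
  proof -
    have "(\<lambda>p::'v \<times> 'v. \<sigma> (snd p) (fst p) * M (snd p)) \<in> borel_measurable (lborel \<Otimes>\<^sub>M lborel)"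
      by measurable
    then have "(\<lambda>v. \<integral>v'. \<sigma> v' v * M v' \<partial>lborel) \<in> borel_measurable lborel"
      by (intro lborel.borel_measurable_lebesgue_integral) (simp add: case_prod_beta')
    then show ?thesis unfolding \<nu>_def coll_freq_def by simp
  qed
  have sab: "\<bar>\<sigma> a b\<bar> \<le> \<bar>\<nu>2\<bar>" for a b using sigma_bounds(1) sigma_bounds(2)[of a b] by linarith
  have intsig: "integrable lborel (\<lambda>v'. \<sigma> v' v * M v')" for v
    by (rule Bochner_Integration.integrable_bound[OF integrable_mult_right[OF M_int(1), of \<nu>2]])
       (use sab M_pos in \<open>auto intro!: AE_I2 mult_right_mono simp: abs_mult less_imp_le\<close>)
  have nub: "\<nu>1 \<le> \<nu> v \<and> \<nu> v \<le> \<nu>2" for v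
  proof
    have "\<nu>1 = (\<integral>v'. \<nu>1 * M v' \<partial>lborel)" using M_int by simp
    also have "\<dots> \<le> \<nu> v" unfolding \<nu>_def coll_freq_def
      by (intro integral_mono integrable_mult_right M_int intsig)
         (use sigma_bounds M_pos in \<open>auto intro!: mult_right_mono less_imp_le\<close>)
    finally show "\<nu>1 \<le> \<nu> v" .
    have "\<nu> v \<le> (\<integral>v'. \<nu>2 * M v' \<partial>lborel)" unfolding \<nu>_def coll_freq_def
      by (intro integral_mono integrable_mult_right M_int intsig)
         (use sigma_bounds M_pos in \<open>auto intro!: mult_right_mono less_imp_le\<close>)
    also have "\<dots> = \<nu>2" using M_int by simp
    finally show "\<nu> v \<le> \<nu>2" .
  qed
  have laml1: "integrable lborel (\<lambda>v. norm (lam v))"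
  proof (rule Bochner_Integration.integrable_bound[OF Bochner_Integration.integrable_add[OF lambda_L2 M_int(1)]])
    show "AE v in lborel. norm (norm (lam v)) \<le> norm ((norm (lam v))\<^sup>2 / M v + M v)"
    proof (intro AE_I2)
      fix v
      have m: "0 < M v" by (rule M_pos)
      have "2 * norm (lam v) * M v \<le> (norm (lam v))\<^sup>2 + (M v)\<^sup>2" by (rule sum_squares_bound)
      moreover have "0 \<le> norm (lam v) * M v" using m by simp
      ultimately have "norm (lam v) * M v \<le> (norm (lam v))\<^sup>2 + M v * M v"
        by (simp add: power2_eq_square)
      then have "norm (lam v) \<le> ((norm (lam v))\<^sup>2 + M v * M v) / M v" using m by (simp add: field_simps)
      also have "\<dots> = (norm (lam v))\<^sup>2 / M v + M v" using m by (simp add: field_simps)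
      finally show "norm (norm (lam v)) \<le> norm ((norm (lam v))\<^sup>2 / M v + M v)" using m by simp
    qed
  qed measurable
  define L where "L = (\<integral>v. norm (lam v) \<partial>lborel)"
  have L0: "0 \<le> L" unfolding L_def by simp
  define KK where "KK = (\<nu>2 * L + \<bar>C\<bar>) / \<nu>1"
  have nu2: "0 < \<nu>2" using sigma_bounds(1) sigma_bounds(2)[of undefined undefined] by linarith
  have AEb: "AE v in lborel. norm (lam v) \<le> KK * M v"
    using lambda_eq
  proof eventually_elim
    case (elim v)
    have m: "0 < M v" by (rule M_pos)
    have i1: "integrable lborel (\<lambda>v'. (\<sigma> v v' * M v) *\<^sub>R lam v')"
    proof (rule Bochner_Integration.integrable_bound[OF integrable_mult_right[OF laml1, of "\<nu>2 * M v"]])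
      show "AE v' in lborel. norm ((\<sigma> v v' * M v) *\<^sub>R lam v') \<le> norm (\<nu>2 * M v * norm (lam v'))"
        using sab m nu2 by (auto intro!: AE_I2 mult_right_mono simp: abs_mult)
    qed measurable
    have i2: "integrable lborel (\<lambda>v'. (\<sigma> v' v * M v') *\<^sub>R lam v)"
      by (rule integrable_scaleR_left[OF intsig])
    have "gradM v = (\<integral>v'. (\<sigma> v v' * M v) *\<^sub>R lam v' \<partial>lborel) - (\<integral>v'. (\<sigma> v' v * M v') *\<^sub>R lam v \<partial>lborel)"
      using elim unfolding Qop_def by (simp add: Bochner_Integration.integral_diff[OF i1 i2])
    also have "(\<integral>v'. (\<sigma> v' v * M v') *\<^sub>R lam v \<partial>lborel) = \<nu> v *\<^sub>R lam v"
      unfolding \<nu>_def coll_freq_def by (rule integral_scaleR_left) (use intsig in blast)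
    finally have eq: "\<nu> v *\<^sub>R lam v = (\<integral>v'. (\<sigma> v v' * M v) *\<^sub>R lam v' \<partial>lborel) - gradM v" by simp
    have n1: "norm (\<integral>v'. (\<sigma> v v' * M v) *\<^sub>R lam v' \<partial>lborel) \<le> \<nu>2 * L * M v"
    proof -
      have "norm (\<integral>v'. (\<sigma> v v' * M v) *\<^sub>R lam v' \<partial>lborel) \<le> (\<integral>v'. norm ((\<sigma> v v' * M v) *\<^sub>R lam v') \<partial>lborel)"
        by (rule integral_norm_bound)
      also have "\<dots> \<le> (\<integral>v'. \<nu>2 * M v * norm (lam v') \<partial>lborel)"
        by (intro integral_mono integrable_norm i1 integrable_mult_right laml1)
           (use sab m nu2 in \<open>auto intro!: mult_right_mono simp: abs_mult\<close>)
      also have "\<dots> = \<nu>2 * L * M v" unfolding L_def by simp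
      finally show ?thesis .
    qed
    have n2: "norm (gradM v) \<le> \<bar>C\<bar> * M v"
    proof -
      have "C * M v / (1 + norm v) \<le> \<bar>C\<bar> * M v / (1 + norm v)"
        using m by (intro divide_right_mono mult_right_mono) auto
      also have "\<dots> \<le> \<bar>C\<bar> * M v" using divide_left_mono[of 1 "1 + norm v" "\<bar>C\<bar> * M v"] m norm_ge_zero[of v] by (simp add: less_imp_le)
      finally show ?thesis using M_grad_bound[of v] by linarith
    qed
    have "\<nu> v * norm (lam v) \<le> \<nu>2 * L * M v + \<bar>C\<bar> * M v"
      using arg_cong[OF eq, of norm] n1 n2 norm_triangle_ineq4[of "\<integral>v'. (\<sigma> v v' * M v) *\<^sub>R lam v' \<partial>lborel" "gradM v"]
        nub[of v] sigma_bounds(1) by simp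
    then have "\<nu>1 * norm (lam v) \<le> (\<nu>2 * L + \<bar>C\<bar>) * M v"
      using nub[of v] by (smt (verit) mult_right_mono norm_ge_zero distrib_right)
    then show ?case unfolding KK_def using sigma_bounds(1) by (simp add: field_simps)
  qed
  have lv: "integrable lborel (\<lambda>v. norm v * norm (lam v))"
  proof (rule Bochner_Integration.integrable_bound[OF integrable_mult_right[OF tail_int[OF Mm _ M_int(1) alpha M_tail], of KK]])
    show "0 \<le> M v" for v using M_pos[of v] by simp
    show "AE v in lborel. norm (norm v * norm (lam v)) \<le> norm (KK * (norm v * M v))"
      using AEb
    proof eventually_elim
      case (elim v)
      have a1: "norm v * norm (lam v) \<le> norm v * (KK * M v)" using elim by (intro mult_left_mono) auto
      have a2: "norm v * (KK * M v) = KK * (norm v * M v)" by (simp add: ac_simps)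
      have a3: "KK * (norm v * M v) \<le> \<bar>KK\<bar> * (norm v * M v)"
        using M_pos[of v] by (intro mult_right_mono) auto
      have a4: "norm (KK * (norm v * M v)) = \<bar>KK\<bar> * (norm v * M v)"
        using M_pos[of v] by (simp add: abs_mult)
      have a5: "norm (norm v * norm (lam v)) = norm v * norm (lam v)" by simp
      show ?case unfolding a4 a5 using a1 a2 a3 by linarith
    qed
  qed measurable
  show ?thesis using num nub laml1 lv unfolding \<nu>_def by blast

qed



lemma G_DT:
  fixes lam :: "'v::euclidean_space \<Rightarrow> 'v" and g :: 'v
  assumes lamm[measurable]: "lam \<in> borel_measurable lborel"
    and lamvi: "integrable lborel (\<lambda>v. norm v * norm (lam v))"
  shows "(\<integral>v. (v \<bullet> g) *\<^sub>R lam v \<partial>lborel) = DT_apply lam g"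
proof (rule euclidean_eqI)
  fix j :: 'v assume j: "j \<in> Basis"
  have ii: "integrable lborel (\<lambda>v. (v \<bullet> i) * (lam v \<bullet> j))" if "i \<in> Basis" for i
  proof (rule Bochner_Integration.integrable_bound[OF lamvi])
    show "AE v in lborel. norm ((v \<bullet> i) * (lam v \<bullet> j)) \<le> norm (norm v * norm (lam v))"
      using Basis_le_norm[OF that] Basis_le_norm[OF j] by (auto intro!: AE_I2 mult_mono simp: abs_mult)
  qed measurable
  have ig: "integrable lborel (\<lambda>v. (v \<bullet> g) *\<^sub>R lam v)"
  proof (rule Bochner_Integration.integrable_bound[OF integrable_mult_right[OF lamvi, of "norm g"]])
    show "AE v in lborel. norm ((v \<bullet> g) *\<^sub>R lam v) \<le> norm (norm g * (norm v * norm (lam v)))"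
    proof (intro AE_I2)
      fix v
      have "\<bar>v \<bullet> g\<bar> * norm (lam v) \<le> (norm v * norm g) * norm (lam v)"
        by (intro mult_right_mono Cauchy_Schwarz_ineq2) auto
      then show "norm ((v \<bullet> g) *\<^sub>R lam v) \<le> norm (norm g * (norm v * norm (lam v)))" by (simp add: ac_simps)
    qed
  qed measurable
  have "(\<integral>v. (v \<bullet> g) *\<^sub>R lam v \<partial>lborel) \<bullet> j = (\<integral>v. ((v \<bullet> g) *\<^sub>R lam v) \<bullet> j \<partial>lborel)"
    by (rule integral_inner_left[symmetric]) (rule ig)
  also have "\<dots> = (\<integral>v. (\<Sum>i\<in>Basis. (g \<bullet> i) * ((v \<bullet> i) * (lam v \<bullet> j))) \<partial>lborel)"
    by (intro Bochner_Integration.integral_cong refl)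
       (simp add: euclidean_inner[of _ g] sum_distrib_left sum_distrib_right ac_simps)
  also have "\<dots> = (\<Sum>i\<in>Basis. (g \<bullet> i) * (\<integral>v. (v \<bullet> i) * (lam v \<bullet> j) \<partial>lborel))"
    using ii by (simp add: Bochner_Integration.integral_sum)
  also have "\<dots> = DT_apply lam g \<bullet> j"
    unfolding DT_apply_def Dmat_def using j by (simp add: inner_sum_left inner_Basis ac_simps if_distrib sum.If_cases)
  finally show "(\<integral>v. (v \<bullet> g) *\<^sub>R lam v \<partial>lborel) \<bullet> j = DT_apply lam g \<bullet> j" .
qed

theorem lemma4p6:
  fixes M :: "'v::euclidean_space \<Rightarrow> real"
    and gradM :: "'v \<Rightarrow> 'v"
    and HM :: "'v \<Rightarrow> 'v \<Rightarrow> 'v"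
    and \<sigma> :: "'v \<Rightarrow> 'v \<Rightarrow> real"
    and lam :: "'v \<Rightarrow> 'v"
    and \<phi> :: "'v \<Rightarrow> real \<Rightarrow> real"
    and \<alpha> \<gamma> C \<nu>0 \<nu>1 \<nu>2 :: real
  assumes alpha: "1 < \<alpha>" "\<alpha> < 2"
    and M_pos: "\<And>v. M v > 0"
    and M_even: "\<And>v. M (- v) = M v"
    and M_int: "integrable lborel M" "(\<integral>v. M v \<partial>lborel) = 1"
    and M_tail: "\<gamma> > 0" "((\<lambda>v. norm v powr (real DIM('v) + \<alpha>) * M v) \<longlongrightarrow> \<gamma>) at_infinity"
    and M_grad: "\<And>v. (M has_derivative (\<lambda>h. gradM v \<bullet> h)) (at v)"
    and M_grad_bound: "\<And>v. norm (gradM v) \<le> C * M v / (1 + norm v)"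
    and M_hess: "\<And>v. (gradM has_derivative HM v) (at v)"
    and M_hess_bound: "\<And>v h. norm (HM v h) \<le> C * M v * norm h"
    and sigma_meas: "(\<lambda>p. \<sigma> (fst p) (snd p)) \<in> borel_measurable borel"
    and sigma_sym: "\<And>v v'. \<sigma> v v' = \<sigma> v' v"
    and sigma_bounds: "0 < \<nu>1" "\<nu>1 \<le> \<nu>2" "\<And>v v'. \<nu>1 \<le> \<sigma> v v' \<and> \<sigma> v v' \<le> \<nu>2"
    and sigma_grad: "\<And>v v'. \<exists>D. (\<sigma> v' has_derivative D) (at v) \<and>
                        (\<forall>h. \<bar>D h\<bar> \<le> C / (1 + norm v) * norm h)"
    and sigma_lim: "\<And>v v'. \<bar>\<sigma> v v' - \<nu>0\<bar> \<le> C / (1 + norm v)"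
    and nu_even: "\<And>v. coll_freq \<sigma> M (- v) = coll_freq \<sigma> M v"
    and lambda_meas: "lam \<in> borel_measurable lborel"
    and lambda_L2: "integrable lborel (\<lambda>v. (norm (lam v))\<^sup>2 / M v)"
    and lambda_eq: "AE v in lborel. Qop \<sigma> M lam v = gradM v"
    and lambda_mean: "(\<integral>v. lam v \<partial>lborel) = 0"
    and phi: "test_function \<phi>"
  defines "\<nu> \<equiv> coll_freq \<sigma> M"
  defines "F \<equiv> (\<lambda>\<epsilon> (x, t). (1 / \<epsilon>) *\<^sub>R
              (\<integral>v. (\<nu> v * (chi \<nu> \<phi> \<epsilon> x v t - \<phi> x t)) *\<^sub>R lam v \<partial>lborel))"
  defines "G \<equiv> (\<lambda>(x, t). (\<integral>v. (v \<bullet> gradx \<phi> x t) *\<^sub>R lam v \<partial>lborel))"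
  shows "(\<forall>x t. G (x, t) = DT_apply lam (gradx \<phi> x t))
       \<and> uniform_limit (UNIV \<times> {0<..}) F G (at_right 0)
       \<and> ((\<lambda>\<epsilon>. \<integral>\<^sup>+ p \<in> UNIV \<times> {0<..}. ennreal ((norm (F \<epsilon> p - G p))\<^sup>2) \<partial>lborel)
            \<longlongrightarrow> 0) (at_right 0)"
  proof -
  have LF: "coll_freq \<sigma> M \<in> borel_measurable lborel \<and> (\<forall>v. \<nu>1 \<le> coll_freq \<sigma> M v \<and> coll_freq \<sigma> M v \<le> \<nu>2)
    \<and> integrable lborel (\<lambda>v. norm (lam v)) \<and> integrable lborel (\<lambda>v. norm v * norm (lam v))"
    by (rule lam_facts[OF alpha(1) M_pos M_int M_tail(2) M_grad M_grad_bound sigma_meas sigma_bounds(1) sigma_bounds(3)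
          lambda_meas lambda_L2 lambda_eq])
  then have num: "\<nu> \<in> borel_measurable lborel" and nub: "\<And>v. \<nu>1 \<le> \<nu> v \<and> \<nu> v \<le> \<nu>2"
    and lami: "integrable lborel (\<lambda>v. norm (lam v))" and lamvi: "integrable lborel (\<lambda>v. norm v * norm (lam v))"
    unfolding \<nu>_def by blast+
  obtain B0 B1 B2 K where B12: "0 < B1" "0 < B2" and Kc: "compact K"
    and contphi: "\<And>t. continuous_on UNIV (\<lambda>x. \<phi> x t)"
    and B0: "\<And>x t. \<bar>\<phi> x t\<bar> \<le> B0"
    and L1: "\<And>x h t. \<bar>\<phi> (x + h) t - \<phi> x t\<bar> \<le> B1 * norm h"
    and gB: "\<And>x t. norm (gradx \<phi> x t) \<le> B1"
    and L2: "\<And>x h t. \<bar>\<phi> (x + h) t - \<phi> x t - h \<bullet> gradx \<phi> x t\<bar> \<le> B2 * (norm h)\<^sup>2"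
    and supp1: "\<And>x t. \<phi> x t \<noteq> 0 \<Longrightarrow> (x, t) \<in> K"
    and supp2: "\<And>x t. gradx \<phi> x t \<noteq> 0 \<Longrightarrow> (x, t) \<in> K"
    using phi_facts[OF phi] by metis
  have main: "uniform_limit (UNIV \<times> {0<..}) F G (at_right 0)
       \<and> ((\<lambda>\<epsilon>. \<integral>\<^sup>+ p \<in> UNIV \<times> {0<..}. ennreal ((norm (F \<epsilon> p - G p))\<^sup>2) \<partial>lborel)
            \<longlongrightarrow> 0) (at_right 0)"
    unfolding F_def G_def
    by (rule core[OF contphi B0 B12(1) B12(2) L1 gB L2 supp1 supp2 Kc num sigma_bounds(1) nub lambda_meas lami lamvi])
  have "G (x, t) = DT_apply lam (gradx \<phi> x t)" for x t
    unfolding G_def using G_DT[OF lambda_meas lamvi] by simp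
  with main show ?thesis by blast
qed

end
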